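(* Let $k\ge2$ and $T_1=\sum_{j=1}^{k-1}(16(k-j)-4)$. Let $e_0=v_1^1v_1^2v_1^3$ and, for $i\in[1,T_1]$, let $s\in[1,k-1]$ be the unique integer with $\sum_{j=1}^{s-1}(16(k-j)-4)<i\le\sum_{j=1}^{s}(16(k-j)-4)$, set $\alpha=i-\sum_{j=1}^{s-1}(16(k-j)-4)\in[1,16(k-s)-4]$, and define - $e_i=v_{2s-1}^1v_{2s-1+\alpha}^2v_1^3$ if $\alpha\in[1,4(k-s)]$; - $e_i=v_{6s-4k-1+\alpha}^1v_{4k-2s-1}^2v_1^3$ if $\alpha\in[4(k-s)+1,8(k-s)]$; - $e_i=v_{4k-2s-1}^1v_{12k-10s-1-\alpha}^2v_1^3$ if $\alpha\in[8(k-s)+1,12(k-s)-2]$; - $e_i=v_{16k-14s-3-\alpha}^1v_{2s+1}^2v_1^3$ if $\alpha\in[12(k-s)-1,16(k-s)-4]$. Then the $3$-graph $H_1=\mathcal{E}\cup\mathcal{F}\cup\{e_0\}$, with vertex set $A_1\cup A_2\cup\{v_1^3\}$, is $(e_i)_{i=0}^{T_1}$-sequential.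
   Context: Let $A_1=\{v^1_1,\dots,v^1_{4k-3}\}$, $A_2=\{v^2_1,\dots,v^2_{4k-3}\}$ be disjoint sets and $v_1^3$ a further vertex. Writing $xyz$ for $\{x,y,z\}$, for $i\in[1,k-1]$ let $\mathcal{E}_{1,i}=\{v_{2i-1}^1v_j^2v_{j+1}^2 : j\in[2i-1,4k-2-2i]\}$, $\mathcal{E}_{2,i}=\{v_j^1v_{j+1}^1v_{4k-1-2i}^2 : j\in[2i-1,4k-2-2i]\}$, $\mathcal{E}_{3,i}=\{v_{4k-1-2i}^1v_j^2v_{j+1}^2 : j\in[2i+1,4k-2-2i]\}$, $\mathcal{E}_{4,i}=\{v_j^1v_{j+1}^1v_{2i+1}^2 : j\in[2i+1,4k-2-2i]\}$, and $\mathcal{E}=\bigcup_{i=1}^{k-1}(\mathcal{E}_{1,i}\cup\mathcal{E}_{2,i}\cup\mathcal{E}_{3,i}\cup\mathcal{E}_{4,i})$. Let $\mathcal{F}=\{v_j^lv_{j+1}^lv_1^3 : j\in[1,4k-4],\ l\in\{1,2\}\}$. The $F_3$-bootstrap process ($F_3=K^3_4$) in the complete $3$-graph on a vertex set $V$ started from $G_0$: $G_i=G_{i-1}\cup\{e : e\notin G_{i-1} \text{ a } 3\text{-subset of } V,\ \exists\, w\in V\setminus e \text{ with the other three } 3\text{-subsets of } e\cup\{w\} \text{ in } G_{i-1}\}$; sets in $G_i\setminus G_{i-1}$ are infected at step $i$; $G_0$ is stationary if $G_1=G_0$. Definition: a $3$-graph $H$ on vertex set $V$ is $(e_i)_{i=0}^T$-sequential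 (for $3$-subsets $e_i$ of $V$ with $e_0\in H$) if (i) the process started from $H$ becomes stationary after $T$ steps and infects only $e_i$ at step $i$ for each $i\in[1,T]$; (ii) $H\setminus\{e_0\}$ is stationary; (iii) the process started from $(H\cup\{e_T\})\setminus\{e_0\}$ infects only $e_{T-i}$ at step $i$ for each $i\in[1,T]$. *)

theory Defs
  imports Main
begin

type_synonym vert = "nat \<times> nat"

definition v :: "nat \<Rightarrow> nat \<Rightarrow> vert" where "v l j = (l, j)"

definition boot_step :: "'a set \<Rightarrow> 'a set set \<Rightarrow> 'a set set" where
  "boot_step V G = G \<union> {e. e \<subseteq> V \<and> card e = 3 \<and> e \<notin> G \<and>
      (\<exists>w \<in> V - e. \<forall>f. f \<subseteq> insert w e \<and> card f = 3 \<and> f \<noteq> e \<longrightarrow> f \<in> G)}"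

definition boot :: "'a set \<Rightarrow> 'a set set \<Rightarrow> nat \<Rightarrow> 'a set set" where
  "boot V G0 i = (boot_step V ^^ i) G0"

definition stationary :: "'a set \<Rightarrow> 'a set set \<Rightarrow> bool" where
  "stationary V G \<longleftrightarrow> boot_step V G = G"

definition is_3graph :: "'a set \<Rightarrow> 'a set set \<Rightarrow> bool" where
  "is_3graph V H \<longleftrightarrow> (\<forall>e \<in> H. e \<subseteq> V \<and> card e = 3)"

definition sequential :: "'a set \<Rightarrow> 'a set set \<Rightarrow> (nat \<Rightarrow> 'a set) \<Rightarrow> nat \<Rightarrow> bool" where
  "sequential V H e T \<longleftrightarrow>
     is_3graph V H \<and>
     (\<forall>i \<le> T. e i \<subseteq> V \<and> card (e i) = 3) \<and> e 0 \<in> H \<and>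
     \<comment> \<open>(i)\<close>
     stationary V (boot V H T) \<and>
     (\<forall>i \<in> {1..T}. boot V H i - boot V H (i - 1) = {e i}) \<and>
     \<comment> \<open>(ii)\<close>
     stationary V (H - {e 0}) \<and>
     \<comment> \<open>(iii)\<close>
     (\<forall>i \<in> {1..T}. boot V ((H \<union> {e T}) - {e 0}) i - boot V ((H \<union> {e T}) - {e 0}) (i - 1)
                     = {e (T - i)})"

definition A1 :: "nat \<Rightarrow> vert set" where "A1 k = {v 1 j | j. j \<in> {1..4*k-3}}"
definition A2 :: "nat \<Rightarrow> vert set" where "A2 k = {v 2 j | j. j \<in> {1..4*k-3}}"
definition VH :: "nat \<Rightarrow> vert set" where "VH k = A1 k \<union> A2 k \<union> {v 3 1}"

definition E1 :: "nat \<Rightarrow> nat \<Rightarrow> vert set set" where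
  "E1 k i = {{v 1 (2*i-1), v 2 j, v 2 (j+1)} | j. j \<in> {2*i-1..4*k-2-2*i}}"
definition E2 :: "nat \<Rightarrow> nat \<Rightarrow> vert set set" where
  "E2 k i = {{v 1 j, v 1 (j+1), v 2 (4*k-1-2*i)} | j. j \<in> {2*i-1..4*k-2-2*i}}"
definition E3 :: "nat \<Rightarrow> nat \<Rightarrow> vert set set" where
  "E3 k i = {{v 1 (4*k-1-2*i), v 2 j, v 2 (j+1)} | j. j \<in> {2*i+1..4*k-2-2*i}}"
definition E4 :: "nat \<Rightarrow> nat \<Rightarrow> vert set set" where
  "E4 k i = {{v 1 j, v 1 (j+1), v 2 (2*i+1)} | j. j \<in> {2*i+1..4*k-2-2*i}}"

definition EE :: "nat \<Rightarrow> vert set set" where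
  "EE k = (\<Union>i \<in> {1..k-1}. E1 k i \<union> E2 k i \<union> E3 k i \<union> E4 k i)"

definition FF :: "nat \<Rightarrow> vert set set" where
  "FF k = {{v l j, v l (j+1), v 3 1} | j l. j \<in> {1..4*k-4} \<and> l \<in> {1,2}}"

definition psum :: "nat \<Rightarrow> nat \<Rightarrow> nat" where
  "psum k s = (\<Sum>j = 1..s. 16*(k-j) - 4)"

definition T1 :: "nat \<Rightarrow> nat" where "T1 k = psum k (k-1)"

definition sidx :: "nat \<Rightarrow> nat \<Rightarrow> nat" where
  "sidx k i = (THE s. s \<in> {1..k-1} \<and> psum k (s-1) < i \<and> i \<le> psum k s)"

text \<open>The sequence e_i. Index arithmetic is written so that no natural-number
 subtraction truncates in the relevant range of alpha.\<close>
definition eseq :: "nat \<Rightarrow> nat \<Rightarrow> vert set" where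
  "eseq k i = (if i = 0 then {v 1 1, v 2 1, v 3 1} else
     (let s = sidx k i; \<alpha> = i - psum k (s-1) in
      if \<alpha> \<in> {1..4*(k-s)} then {v 1 (2*s-1), v 2 (2*s-1+\<alpha>), v 3 1}
      else if \<alpha> \<in> {4*(k-s)+1..8*(k-s)} then {v 1 ((6*s+\<alpha>) - (4*k+1)), v 2 (4*k-2*s-1), v 3 1}
      else if \<alpha> \<in> {8*(k-s)+1..12*(k-s)-2} then {v 1 (4*k-2*s-1), v 2 (12*k - (10*s+1+\<alpha>)), v 3 1}
      else {v 1 (16*k - (14*s+3+\<alpha>)), v 2 (2*s+1), v 3 1}))"

definition H1 :: "nat \<Rightarrow> vert set set" where
  "H1 k = EE k \<union> FF k \<union> {eseq k 0}"

end

theory Submission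
  imports Defs
begin

definition rci :: "int \<Rightarrow> int \<Rightarrow> int \<Rightarrow> int \<times> int" where
  "rci K S A = (if A \<le> 4*(K-S) then (2*S-1, 2*S-1+A)
      else if A \<le> 8*(K-S) then (6*S+A - (4*K+1), 4*K-2*S-1)
      else if A \<le> 12*(K-S)-2 then (4*K-2*S-1, 12*K - (10*S+1+A))
      else (16*K - (14*S+3+A), 2*S+1))"

definition adjI :: "int \<times> int \<Rightarrow> int \<times> int \<Rightarrow> bool" where
  "adjI c d \<longleftrightarrow> (fst c = fst d \<and> (snd d = snd c + 1 \<or> snd c = snd d + 1)) \<or>
                (snd c = snd d \<and> (fst d = fst c + 1 \<or> fst c = fst d + 1))"

lemma rci_0:
  fixes K S A :: int
  assumes "0 \<le> A" "A \<le> 4*(K-S)" "S < K"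
  shows "rci K S A = (2*S-1, 2*S-1+A)"
  using assms unfolding rci_def by auto

lemma rci_1:
  fixes K S A :: int
  assumes "4*(K-S) < A" "A \<le> 8*(K-S)" "S < K"
  shows "rci K S A = (6*S+A - (4*K+1), 4*K-2*S-1)"
  using assms unfolding rci_def by auto

lemma rci_2:
  fixes K S A :: int
  assumes "8*(K-S) < A" "A \<le> 12*(K-S)-2" "S < K"
  shows "rci K S A = (4*K-2*S-1, 12*K - (10*S+1+A))"
  using assms unfolding rci_def by auto

lemma rci_3:
  fixes K S A :: int
  assumes "12*(K-S)-2 < A" "A \<le> 16*(K-S)-4" "S < K"
  shows "rci K S A = (16*K - (14*S+3+A), 2*S+1)"
  using assms unfolding rci_def by auto

lemma R3_00:
  fixes K S T A B :: int
  assumes "2 \<le> K" "1 \<le> S" "S \<le> K-1" "1 \<le> T" "T \<le> K-1" "1 \<le> A \<or> S = 1" "1 \<le> B \<or> T = 1" "0 \<le> A" "A \<le> 4*(K-S)" "0 \<le> B" "B \<le> 4*(K-T)"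
    "adjI (rci K S A) (rci K T B)"
  shows "(S = T \<and> (B = A+1 \<or> A = B+1)) \<or> (T = S+1 \<and> A = 16*(K-S) - 4 \<and> B = 1) \<or> (S = T+1 \<and> B = 16*(K-T) - 4 \<and> A = 1)"
proof -
  have SK: "S < K" and TK: "T < K" using assms by linarith+
  show ?thesis using assms(12) unfolding rci_0[OF assms(8,9) SK] rci_0[OF assms(10,11) TK] adjI_def fst_conv snd_conv
    using assms(1-11) by smt
qed

lemma R4_00:
  fixes K S T A B :: int
  assumes "2 \<le> K" "1 \<le> S" "S \<le> K-1" "1 \<le> T" "T \<le> K-1" "1 \<le> A \<or> S = 1" "1 \<le> B \<or> T = 1" "0 \<le> A" "A \<le> 4*(K-S)" "0 \<le> B" "B \<le> 4*(K-T)"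
    "rci K S A = rci K T B"
  shows "S = T \<and> A = B"
proof -
  have SK: "S < K" and TK: "T < K" using assms by linarith+
  show ?thesis using assms(12) unfolding rci_0[OF assms(8,9) SK] rci_0[OF assms(10,11) TK] prod.inject
    using assms(1-11) by smt
qed

lemma Q2_00:
  fixes K S A :: int
  assumes "2 \<le> K" "1 \<le> S" "S \<le> K-1" "0 \<le> A" "A \<le> 4*(K-S)" "0 \<le> (A+1)" "(A+1) \<le> 4*(K-S)" "A < 16*(K-S)-4"
  shows "adjI (rci K S A) (rci K S (A+1))"
proof -
  have SK: "S < K" using assms by linarith
  show ?thesis unfolding rci_0[OF assms(4,5) SK] rci_0[OF assms(6,7) SK] adjI_def fst_conv snd_conv
    using assms by smt
qed

lemma R3_01:
  fixes K S T A B :: int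
  assumes "2 \<le> K" "1 \<le> S" "S \<le> K-1" "1 \<le> T" "T \<le> K-1" "1 \<le> A \<or> S = 1" "1 \<le> B \<or> T = 1" "0 \<le> A" "A \<le> 4*(K-S)" "4*(K-T) < B" "B \<le> 8*(K-T)"
    "adjI (rci K S A) (rci K T B)"
  shows "(S = T \<and> (B = A+1 \<or> A = B+1)) \<or> (T = S+1 \<and> A = 16*(K-S) - 4 \<and> B = 1) \<or> (S = T+1 \<and> B = 16*(K-T) - 4 \<and> A = 1)"
proof -
  have SK: "S < K" and TK: "T < K" using assms by linarith+
  show ?thesis using assms(12) unfolding rci_0[OF assms(8,9) SK] rci_1[OF assms(10,11) TK] adjI_def fst_conv snd_conv
    using assms(1-11) by smt
qed

lemma R4_01:
  fixes K S T A B :: int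
  assumes "2 \<le> K" "1 \<le> S" "S \<le> K-1" "1 \<le> T" "T \<le> K-1" "1 \<le> A \<or> S = 1" "1 \<le> B \<or> T = 1" "0 \<le> A" "A \<le> 4*(K-S)" "4*(K-T) < B" "B \<le> 8*(K-T)"
    "rci K S A = rci K T B"
  shows "S = T \<and> A = B"
proof -
  have SK: "S < K" and TK: "T < K" using assms by linarith+
  show ?thesis using assms(12) unfolding rci_0[OF assms(8,9) SK] rci_1[OF assms(10,11) TK] prod.inject
    using assms(1-11) by smt
qed

lemma Q2_01:
  fixes K S A :: int
  assumes "2 \<le> K" "1 \<le> S" "S \<le> K-1" "0 \<le> A" "A \<le> 4*(K-S)" "4*(K-S) < (A+1)" "(A+1) \<le> 8*(K-S)" "A < 16*(K-S)-4"
  shows "adjI (rci K S A) (rci K S (A+1))"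
proof -
  have SK: "S < K" using assms by linarith
  show ?thesis unfolding rci_0[OF assms(4,5) SK] rci_1[OF assms(6,7) SK] adjI_def fst_conv snd_conv
    using assms by smt
qed

lemma R3_02:
  fixes K S T A B :: int
  assumes "2 \<le> K" "1 \<le> S" "S \<le> K-1" "1 \<le> T" "T \<le> K-1" "1 \<le> A \<or> S = 1" "1 \<le> B \<or> T = 1" "0 \<le> A" "A \<le> 4*(K-S)" "8*(K-T) < B" "B \<le> 12*(K-T)-2"
    "adjI (rci K S A) (rci K T B)"
  shows "(S = T \<and> (B = A+1 \<or> A = B+1)) \<or> (T = S+1 \<and> A = 16*(K-S) - 4 \<and> B = 1) \<or> (S = T+1 \<and> B = 16*(K-T) - 4 \<and> A = 1)"
proof -
  have SK: "S < K" and TK: "T < K" using assms by linarith+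
  show ?thesis using assms(12) unfolding rci_0[OF assms(8,9) SK] rci_2[OF assms(10,11) TK] adjI_def fst_conv snd_conv
    using assms(1-11) by smt
qed

lemma R4_02:
  fixes K S T A B :: int
  assumes "2 \<le> K" "1 \<le> S" "S \<le> K-1" "1 \<le> T" "T \<le> K-1" "1 \<le> A \<or> S = 1" "1 \<le> B \<or> T = 1" "0 \<le> A" "A \<le> 4*(K-S)" "8*(K-T) < B" "B \<le> 12*(K-T)-2"
    "rci K S A = rci K T B"
  shows "S = T \<and> A = B"
proof -
  have SK: "S < K" and TK: "T < K" using assms by linarith+
  show ?thesis using assms(12) unfolding rci_0[OF assms(8,9) SK] rci_2[OF assms(10,11) TK] prod.inject
    using assms(1-11) by smt
qed

lemma Q2_02:
  fixes K S A :: int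
  assumes "2 \<le> K" "1 \<le> S" "S \<le> K-1" "0 \<le> A" "A \<le> 4*(K-S)" "8*(K-S) < (A+1)" "(A+1) \<le> 12*(K-S)-2" "A < 16*(K-S)-4"
  shows "adjI (rci K S A) (rci K S (A+1))"
proof -
  have SK: "S < K" using assms by linarith
  show ?thesis unfolding rci_0[OF assms(4,5) SK] rci_2[OF assms(6,7) SK] adjI_def fst_conv snd_conv
    using assms by smt
qed

lemma R3_03:
  fixes K S T A B :: int
  assumes "2 \<le> K" "1 \<le> S" "S \<le> K-1" "1 \<le> T" "T \<le> K-1" "1 \<le> A \<or> S = 1" "1 \<le> B \<or> T = 1" "0 \<le> A" "A \<le> 4*(K-S)" "12*(K-T)-2 < B" "B \<le> 16*(K-T)-4"
    "adjI (rci K S A) (rci K T B)"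
  shows "(S = T \<and> (B = A+1 \<or> A = B+1)) \<or> (T = S+1 \<and> A = 16*(K-S) - 4 \<and> B = 1) \<or> (S = T+1 \<and> B = 16*(K-T) - 4 \<and> A = 1)"
proof -
  have SK: "S < K" and TK: "T < K" using assms by linarith+
  show ?thesis using assms(12) unfolding rci_0[OF assms(8,9) SK] rci_3[OF assms(10,11) TK] adjI_def fst_conv snd_conv
    using assms(1-11) by smt
qed

lemma R4_03:
  fixes K S T A B :: int
  assumes "2 \<le> K" "1 \<le> S" "S \<le> K-1" "1 \<le> T" "T \<le> K-1" "1 \<le> A \<or> S = 1" "1 \<le> B \<or> T = 1" "0 \<le> A" "A \<le> 4*(K-S)" "12*(K-T)-2 < B" "B \<le> 16*(K-T)-4"
    "rci K S A = rci K T B"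
  shows "S = T \<and> A = B"
proof -
  have SK: "S < K" and TK: "T < K" using assms by linarith+
  show ?thesis using assms(12) unfolding rci_0[OF assms(8,9) SK] rci_3[OF assms(10,11) TK] prod.inject
    using assms(1-11) by smt
qed

lemma Q2_03:
  fixes K S A :: int
  assumes "2 \<le> K" "1 \<le> S" "S \<le> K-1" "0 \<le> A" "A \<le> 4*(K-S)" "12*(K-S)-2 < (A+1)" "(A+1) \<le> 16*(K-S)-4" "A < 16*(K-S)-4"
  shows "adjI (rci K S A) (rci K S (A+1))"
proof -
  have SK: "S < K" using assms by linarith
  show ?thesis unfolding rci_0[OF assms(4,5) SK] rci_3[OF assms(6,7) SK] adjI_def fst_conv snd_conv
    using assms by smt
qed

lemma R3_10:
  fixes K S T A B :: int
  assumes "2 \<le> K" "1 \<le> S" "S \<le> K-1" "1 \<le> T" "T \<le> K-1" "1 \<le> A \<or> S = 1" "1 \<le> B \<or> T = 1" "4*(K-S) < A" "A \<le> 8*(K-S)" "0 \<le> B" "B \<le> 4*(K-T)"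
    "adjI (rci K S A) (rci K T B)"
  shows "(S = T \<and> (B = A+1 \<or> A = B+1)) \<or> (T = S+1 \<and> A = 16*(K-S) - 4 \<and> B = 1) \<or> (S = T+1 \<and> B = 16*(K-T) - 4 \<and> A = 1)"
proof -
  have SK: "S < K" and TK: "T < K" using assms by linarith+
  show ?thesis using assms(12) unfolding rci_1[OF assms(8,9) SK] rci_0[OF assms(10,11) TK] adjI_def fst_conv snd_conv
    using assms(1-11) by smt
qed

lemma R4_10:
  fixes K S T A B :: int
  assumes "2 \<le> K" "1 \<le> S" "S \<le> K-1" "1 \<le> T" "T \<le> K-1" "1 \<le> A \<or> S = 1" "1 \<le> B \<or> T = 1" "4*(K-S) < A" "A \<le> 8*(K-S)" "0 \<le> B" "B \<le> 4*(K-T)"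
    "rci K S A = rci K T B"
  shows "S = T \<and> A = B"
proof -
  have SK: "S < K" and TK: "T < K" using assms by linarith+
  show ?thesis using assms(12) unfolding rci_1[OF assms(8,9) SK] rci_0[OF assms(10,11) TK] prod.inject
    using assms(1-11) by smt
qed

lemma Q2_10:
  fixes K S A :: int
  assumes "2 \<le> K" "1 \<le> S" "S \<le> K-1" "4*(K-S) < A" "A \<le> 8*(K-S)" "0 \<le> (A+1)" "(A+1) \<le> 4*(K-S)" "A < 16*(K-S)-4"
  shows "adjI (rci K S A) (rci K S (A+1))"
proof -
  have SK: "S < K" using assms by linarith
  show ?thesis unfolding rci_1[OF assms(4,5) SK] rci_0[OF assms(6,7) SK] adjI_def fst_conv snd_conv
    using assms by smt
qed

lemma R3_11:
  fixes K S T A B :: int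
  assumes "2 \<le> K" "1 \<le> S" "S \<le> K-1" "1 \<le> T" "T \<le> K-1" "1 \<le> A \<or> S = 1" "1 \<le> B \<or> T = 1" "4*(K-S) < A" "A \<le> 8*(K-S)" "4*(K-T) < B" "B \<le> 8*(K-T)"
    "adjI (rci K S A) (rci K T B)"
  shows "(S = T \<and> (B = A+1 \<or> A = B+1)) \<or> (T = S+1 \<and> A = 16*(K-S) - 4 \<and> B = 1) \<or> (S = T+1 \<and> B = 16*(K-T) - 4 \<and> A = 1)"
proof -
  have SK: "S < K" and TK: "T < K" using assms by linarith+
  show ?thesis using assms(12) unfolding rci_1[OF assms(8,9) SK] rci_1[OF assms(10,11) TK] adjI_def fst_conv snd_conv
    using assms(1-11) by smt
qed

lemma R4_11:
  fixes K S T A B :: int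
  assumes "2 \<le> K" "1 \<le> S" "S \<le> K-1" "1 \<le> T" "T \<le> K-1" "1 \<le> A \<or> S = 1" "1 \<le> B \<or> T = 1" "4*(K-S) < A" "A \<le> 8*(K-S)" "4*(K-T) < B" "B \<le> 8*(K-T)"
    "rci K S A = rci K T B"
  shows "S = T \<and> A = B"
proof -
  have SK: "S < K" and TK: "T < K" using assms by linarith+
  show ?thesis using assms(12) unfolding rci_1[OF assms(8,9) SK] rci_1[OF assms(10,11) TK] prod.inject
    using assms(1-11) by smt
qed

lemma Q2_11:
  fixes K S A :: int
  assumes "2 \<le> K" "1 \<le> S" "S \<le> K-1" "4*(K-S) < A" "A \<le> 8*(K-S)" "4*(K-S) < (A+1)" "(A+1) \<le> 8*(K-S)" "A < 16*(K-S)-4"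
  shows "adjI (rci K S A) (rci K S (A+1))"
proof -
  have SK: "S < K" using assms by linarith
  show ?thesis unfolding rci_1[OF assms(4,5) SK] rci_1[OF assms(6,7) SK] adjI_def fst_conv snd_conv
    using assms by smt
qed

lemma R3_12:
  fixes K S T A B :: int
  assumes "2 \<le> K" "1 \<le> S" "S \<le> K-1" "1 \<le> T" "T \<le> K-1" "1 \<le> A \<or> S = 1" "1 \<le> B \<or> T = 1" "4*(K-S) < A" "A \<le> 8*(K-S)" "8*(K-T) < B" "B \<le> 12*(K-T)-2"
    "adjI (rci K S A) (rci K T B)"
  shows "(S = T \<and> (B = A+1 \<or> A = B+1)) \<or> (T = S+1 \<and> A = 16*(K-S) - 4 \<and> B = 1) \<or> (S = T+1 \<and> B = 16*(K-T) - 4 \<and> A = 1)"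
proof -
  have SK: "S < K" and TK: "T < K" using assms by linarith+
  show ?thesis using assms(12) unfolding rci_1[OF assms(8,9) SK] rci_2[OF assms(10,11) TK] adjI_def fst_conv snd_conv
    using assms(1-11) by smt
qed

lemma R4_12:
  fixes K S T A B :: int
  assumes "2 \<le> K" "1 \<le> S" "S \<le> K-1" "1 \<le> T" "T \<le> K-1" "1 \<le> A \<or> S = 1" "1 \<le> B \<or> T = 1" "4*(K-S) < A" "A \<le> 8*(K-S)" "8*(K-T) < B" "B \<le> 12*(K-T)-2"
    "rci K S A = rci K T B"
  shows "S = T \<and> A = B"
proof -
  have SK: "S < K" and TK: "T < K" using assms by linarith+
  show ?thesis using assms(12) unfolding rci_1[OF assms(8,9) SK] rci_2[OF assms(10,11) TK] prod.inject
    using assms(1-11) by smt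
qed

lemma Q2_12:
  fixes K S A :: int
  assumes "2 \<le> K" "1 \<le> S" "S \<le> K-1" "4*(K-S) < A" "A \<le> 8*(K-S)" "8*(K-S) < (A+1)" "(A+1) \<le> 12*(K-S)-2" "A < 16*(K-S)-4"
  shows "adjI (rci K S A) (rci K S (A+1))"
proof -
  have SK: "S < K" using assms by linarith
  show ?thesis unfolding rci_1[OF assms(4,5) SK] rci_2[OF assms(6,7) SK] adjI_def fst_conv snd_conv
    using assms by smt
qed

lemma R3_13:
  fixes K S T A B :: int
  assumes "2 \<le> K" "1 \<le> S" "S \<le> K-1" "1 \<le> T" "T \<le> K-1" "1 \<le> A \<or> S = 1" "1 \<le> B \<or> T = 1" "4*(K-S) < A" "A \<le> 8*(K-S)" "12*(K-T)-2 < B" "B \<le> 16*(K-T)-4"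
    "adjI (rci K S A) (rci K T B)"
  shows "(S = T \<and> (B = A+1 \<or> A = B+1)) \<or> (T = S+1 \<and> A = 16*(K-S) - 4 \<and> B = 1) \<or> (S = T+1 \<and> B = 16*(K-T) - 4 \<and> A = 1)"
proof -
  have SK: "S < K" and TK: "T < K" using assms by linarith+
  show ?thesis using assms(12) unfolding rci_1[OF assms(8,9) SK] rci_3[OF assms(10,11) TK] adjI_def fst_conv snd_conv
    using assms(1-11) by smt
qed

lemma R4_13:
  fixes K S T A B :: int
  assumes "2 \<le> K" "1 \<le> S" "S \<le> K-1" "1 \<le> T" "T \<le> K-1" "1 \<le> A \<or> S = 1" "1 \<le> B \<or> T = 1" "4*(K-S) < A" "A \<le> 8*(K-S)" "12*(K-T)-2 < B" "B \<le> 16*(K-T)-4"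
    "rci K S A = rci K T B"
  shows "S = T \<and> A = B"
proof -
  have SK: "S < K" and TK: "T < K" using assms by linarith+
  show ?thesis using assms(12) unfolding rci_1[OF assms(8,9) SK] rci_3[OF assms(10,11) TK] prod.inject
    using assms(1-11) by smt
qed

lemma Q2_13:
  fixes K S A :: int
  assumes "2 \<le> K" "1 \<le> S" "S \<le> K-1" "4*(K-S) < A" "A \<le> 8*(K-S)" "12*(K-S)-2 < (A+1)" "(A+1) \<le> 16*(K-S)-4" "A < 16*(K-S)-4"
  shows "adjI (rci K S A) (rci K S (A+1))"
proof -
  have SK: "S < K" using assms by linarith
  show ?thesis unfolding rci_1[OF assms(4,5) SK] rci_3[OF assms(6,7) SK] adjI_def fst_conv snd_conv
    using assms by smt
qed

lemma R3_20:
  fixes K S T A B :: int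
  assumes "2 \<le> K" "1 \<le> S" "S \<le> K-1" "1 \<le> T" "T \<le> K-1" "1 \<le> A \<or> S = 1" "1 \<le> B \<or> T = 1" "8*(K-S) < A" "A \<le> 12*(K-S)-2" "0 \<le> B" "B \<le> 4*(K-T)"
    "adjI (rci K S A) (rci K T B)"
  shows "(S = T \<and> (B = A+1 \<or> A = B+1)) \<or> (T = S+1 \<and> A = 16*(K-S) - 4 \<and> B = 1) \<or> (S = T+1 \<and> B = 16*(K-T) - 4 \<and> A = 1)"
proof -
  have SK: "S < K" and TK: "T < K" using assms by linarith+
  show ?thesis using assms(12) unfolding rci_2[OF assms(8,9) SK] rci_0[OF assms(10,11) TK] adjI_def fst_conv snd_conv
    using assms(1-11) by smt
qed

lemma R4_20:
  fixes K S T A B :: int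
  assumes "2 \<le> K" "1 \<le> S" "S \<le> K-1" "1 \<le> T" "T \<le> K-1" "1 \<le> A \<or> S = 1" "1 \<le> B \<or> T = 1" "8*(K-S) < A" "A \<le> 12*(K-S)-2" "0 \<le> B" "B \<le> 4*(K-T)"
    "rci K S A = rci K T B"
  shows "S = T \<and> A = B"
proof -
  have SK: "S < K" and TK: "T < K" using assms by linarith+
  show ?thesis using assms(12) unfolding rci_2[OF assms(8,9) SK] rci_0[OF assms(10,11) TK] prod.inject
    using assms(1-11) by smt
qed

lemma Q2_20:
  fixes K S A :: int
  assumes "2 \<le> K" "1 \<le> S" "S \<le> K-1" "8*(K-S) < A" "A \<le> 12*(K-S)-2" "0 \<le> (A+1)" "(A+1) \<le> 4*(K-S)" "A < 16*(K-S)-4"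
  shows "adjI (rci K S A) (rci K S (A+1))"
proof -
  have SK: "S < K" using assms by linarith
  show ?thesis unfolding rci_2[OF assms(4,5) SK] rci_0[OF assms(6,7) SK] adjI_def fst_conv snd_conv
    using assms by smt
qed

lemma R3_21:
  fixes K S T A B :: int
  assumes "2 \<le> K" "1 \<le> S" "S \<le> K-1" "1 \<le> T" "T \<le> K-1" "1 \<le> A \<or> S = 1" "1 \<le> B \<or> T = 1" "8*(K-S) < A" "A \<le> 12*(K-S)-2" "4*(K-T) < B" "B \<le> 8*(K-T)"
    "adjI (rci K S A) (rci K T B)"
  shows "(S = T \<and> (B = A+1 \<or> A = B+1)) \<or> (T = S+1 \<and> A = 16*(K-S) - 4 \<and> B = 1) \<or> (S = T+1 \<and> B = 16*(K-T) - 4 \<and> A = 1)"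
proof -
  have SK: "S < K" and TK: "T < K" using assms by linarith+
  show ?thesis using assms(12) unfolding rci_2[OF assms(8,9) SK] rci_1[OF assms(10,11) TK] adjI_def fst_conv snd_conv
    using assms(1-11) by smt
qed

lemma R4_21:
  fixes K S T A B :: int
  assumes "2 \<le> K" "1 \<le> S" "S \<le> K-1" "1 \<le> T" "T \<le> K-1" "1 \<le> A \<or> S = 1" "1 \<le> B \<or> T = 1" "8*(K-S) < A" "A \<le> 12*(K-S)-2" "4*(K-T) < B" "B \<le> 8*(K-T)"
    "rci K S A = rci K T B"
  shows "S = T \<and> A = B"
proof -
  have SK: "S < K" and TK: "T < K" using assms by linarith+
  show ?thesis using assms(12) unfolding rci_2[OF assms(8,9) SK] rci_1[OF assms(10,11) TK] prod.inject
    using assms(1-11) by smt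
qed

lemma Q2_21:
  fixes K S A :: int
  assumes "2 \<le> K" "1 \<le> S" "S \<le> K-1" "8*(K-S) < A" "A \<le> 12*(K-S)-2" "4*(K-S) < (A+1)" "(A+1) \<le> 8*(K-S)" "A < 16*(K-S)-4"
  shows "adjI (rci K S A) (rci K S (A+1))"
proof -
  have SK: "S < K" using assms by linarith
  show ?thesis unfolding rci_2[OF assms(4,5) SK] rci_1[OF assms(6,7) SK] adjI_def fst_conv snd_conv
    using assms by smt
qed

lemma R3_22:
  fixes K S T A B :: int
  assumes "2 \<le> K" "1 \<le> S" "S \<le> K-1" "1 \<le> T" "T \<le> K-1" "1 \<le> A \<or> S = 1" "1 \<le> B \<or> T = 1" "8*(K-S) < A" "A \<le> 12*(K-S)-2" "8*(K-T) < B" "B \<le> 12*(K-T)-2"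
    "adjI (rci K S A) (rci K T B)"
  shows "(S = T \<and> (B = A+1 \<or> A = B+1)) \<or> (T = S+1 \<and> A = 16*(K-S) - 4 \<and> B = 1) \<or> (S = T+1 \<and> B = 16*(K-T) - 4 \<and> A = 1)"
proof -
  have SK: "S < K" and TK: "T < K" using assms by linarith+
  show ?thesis using assms(12) unfolding rci_2[OF assms(8,9) SK] rci_2[OF assms(10,11) TK] adjI_def fst_conv snd_conv
    using assms(1-11) by smt
qed

lemma R4_22:
  fixes K S T A B :: int
  assumes "2 \<le> K" "1 \<le> S" "S \<le> K-1" "1 \<le> T" "T \<le> K-1" "1 \<le> A \<or> S = 1" "1 \<le> B \<or> T = 1" "8*(K-S) < A" "A \<le> 12*(K-S)-2" "8*(K-T) < B" "B \<le> 12*(K-T)-2"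
    "rci K S A = rci K T B"
  shows "S = T \<and> A = B"
proof -
  have SK: "S < K" and TK: "T < K" using assms by linarith+
  show ?thesis using assms(12) unfolding rci_2[OF assms(8,9) SK] rci_2[OF assms(10,11) TK] prod.inject
    using assms(1-11) by smt
qed

lemma Q2_22:
  fixes K S A :: int
  assumes "2 \<le> K" "1 \<le> S" "S \<le> K-1" "8*(K-S) < A" "A \<le> 12*(K-S)-2" "8*(K-S) < (A+1)" "(A+1) \<le> 12*(K-S)-2" "A < 16*(K-S)-4"
  shows "adjI (rci K S A) (rci K S (A+1))"
proof -
  have SK: "S < K" using assms by linarith
  show ?thesis unfolding rci_2[OF assms(4,5) SK] rci_2[OF assms(6,7) SK] adjI_def fst_conv snd_conv
    using assms by smt
qed

lemma R3_23:
  fixes K S T A B :: int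
  assumes "2 \<le> K" "1 \<le> S" "S \<le> K-1" "1 \<le> T" "T \<le> K-1" "1 \<le> A \<or> S = 1" "1 \<le> B \<or> T = 1" "8*(K-S) < A" "A \<le> 12*(K-S)-2" "12*(K-T)-2 < B" "B \<le> 16*(K-T)-4"
    "adjI (rci K S A) (rci K T B)"
  shows "(S = T \<and> (B = A+1 \<or> A = B+1)) \<or> (T = S+1 \<and> A = 16*(K-S) - 4 \<and> B = 1) \<or> (S = T+1 \<and> B = 16*(K-T) - 4 \<and> A = 1)"
proof -
  have SK: "S < K" and TK: "T < K" using assms by linarith+
  show ?thesis using assms(12) unfolding rci_2[OF assms(8,9) SK] rci_3[OF assms(10,11) TK] adjI_def fst_conv snd_conv
    using assms(1-11) by smt
qed

lemma R4_23:
  fixes K S T A B :: int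
  assumes "2 \<le> K" "1 \<le> S" "S \<le> K-1" "1 \<le> T" "T \<le> K-1" "1 \<le> A \<or> S = 1" "1 \<le> B \<or> T = 1" "8*(K-S) < A" "A \<le> 12*(K-S)-2" "12*(K-T)-2 < B" "B \<le> 16*(K-T)-4"
    "rci K S A = rci K T B"
  shows "S = T \<and> A = B"
proof -
  have SK: "S < K" and TK: "T < K" using assms by linarith+
  show ?thesis using assms(12) unfolding rci_2[OF assms(8,9) SK] rci_3[OF assms(10,11) TK] prod.inject
    using assms(1-11) by smt
qed

lemma Q2_23:
  fixes K S A :: int
  assumes "2 \<le> K" "1 \<le> S" "S \<le> K-1" "8*(K-S) < A" "A \<le> 12*(K-S)-2" "12*(K-S)-2 < (A+1)" "(A+1) \<le> 16*(K-S)-4" "A < 16*(K-S)-4"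
  shows "adjI (rci K S A) (rci K S (A+1))"
proof -
  have SK: "S < K" using assms by linarith
  show ?thesis unfolding rci_2[OF assms(4,5) SK] rci_3[OF assms(6,7) SK] adjI_def fst_conv snd_conv
    using assms by smt
qed

lemma R3_30:
  fixes K S T A B :: int
  assumes "2 \<le> K" "1 \<le> S" "S \<le> K-1" "1 \<le> T" "T \<le> K-1" "1 \<le> A \<or> S = 1" "1 \<le> B \<or> T = 1" "12*(K-S)-2 < A" "A \<le> 16*(K-S)-4" "0 \<le> B" "B \<le> 4*(K-T)"
    "adjI (rci K S A) (rci K T B)"
  shows "(S = T \<and> (B = A+1 \<or> A = B+1)) \<or> (T = S+1 \<and> A = 16*(K-S) - 4 \<and> B = 1) \<or> (S = T+1 \<and> B = 16*(K-T) - 4 \<and> A = 1)"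
proof -
  have SK: "S < K" and TK: "T < K" using assms by linarith+
  show ?thesis using assms(12) unfolding rci_3[OF assms(8,9) SK] rci_0[OF assms(10,11) TK] adjI_def fst_conv snd_conv
    using assms(1-11) by smt
qed

lemma R4_30:
  fixes K S T A B :: int
  assumes "2 \<le> K" "1 \<le> S" "S \<le> K-1" "1 \<le> T" "T \<le> K-1" "1 \<le> A \<or> S = 1" "1 \<le> B \<or> T = 1" "12*(K-S)-2 < A" "A \<le> 16*(K-S)-4" "0 \<le> B" "B \<le> 4*(K-T)"
    "rci K S A = rci K T B"
  shows "S = T \<and> A = B"
proof -
  have SK: "S < K" and TK: "T < K" using assms by linarith+
  show ?thesis using assms(12) unfolding rci_3[OF assms(8,9) SK] rci_0[OF assms(10,11) TK] prod.inject
    using assms(1-11) by smt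
qed

lemma Q2_30:
  fixes K S A :: int
  assumes "2 \<le> K" "1 \<le> S" "S \<le> K-1" "12*(K-S)-2 < A" "A \<le> 16*(K-S)-4" "0 \<le> (A+1)" "(A+1) \<le> 4*(K-S)" "A < 16*(K-S)-4"
  shows "adjI (rci K S A) (rci K S (A+1))"
proof -
  have SK: "S < K" using assms by linarith
  show ?thesis unfolding rci_3[OF assms(4,5) SK] rci_0[OF assms(6,7) SK] adjI_def fst_conv snd_conv
    using assms by smt
qed

lemma R3_31:
  fixes K S T A B :: int
  assumes "2 \<le> K" "1 \<le> S" "S \<le> K-1" "1 \<le> T" "T \<le> K-1" "1 \<le> A \<or> S = 1" "1 \<le> B \<or> T = 1" "12*(K-S)-2 < A" "A \<le> 16*(K-S)-4" "4*(K-T) < B" "B \<le> 8*(K-T)"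
    "adjI (rci K S A) (rci K T B)"
  shows "(S = T \<and> (B = A+1 \<or> A = B+1)) \<or> (T = S+1 \<and> A = 16*(K-S) - 4 \<and> B = 1) \<or> (S = T+1 \<and> B = 16*(K-T) - 4 \<and> A = 1)"
proof -
  have SK: "S < K" and TK: "T < K" using assms by linarith+
  show ?thesis using assms(12) unfolding rci_3[OF assms(8,9) SK] rci_1[OF assms(10,11) TK] adjI_def fst_conv snd_conv
    using assms(1-11) by smt
qed

lemma R4_31:
  fixes K S T A B :: int
  assumes "2 \<le> K" "1 \<le> S" "S \<le> K-1" "1 \<le> T" "T \<le> K-1" "1 \<le> A \<or> S = 1" "1 \<le> B \<or> T = 1" "12*(K-S)-2 < A" "A \<le> 16*(K-S)-4" "4*(K-T) < B" "B \<le> 8*(K-T)"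
    "rci K S A = rci K T B"
  shows "S = T \<and> A = B"
proof -
  have SK: "S < K" and TK: "T < K" using assms by linarith+
  show ?thesis using assms(12) unfolding rci_3[OF assms(8,9) SK] rci_1[OF assms(10,11) TK] prod.inject
    using assms(1-11) by smt
qed

lemma Q2_31:
  fixes K S A :: int
  assumes "2 \<le> K" "1 \<le> S" "S \<le> K-1" "12*(K-S)-2 < A" "A \<le> 16*(K-S)-4" "4*(K-S) < (A+1)" "(A+1) \<le> 8*(K-S)" "A < 16*(K-S)-4"
  shows "adjI (rci K S A) (rci K S (A+1))"
proof -
  have SK: "S < K" using assms by linarith
  show ?thesis unfolding rci_3[OF assms(4,5) SK] rci_1[OF assms(6,7) SK] adjI_def fst_conv snd_conv
    using assms by smt
qed

lemma R3_32:
  fixes K S T A B :: int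
  assumes "2 \<le> K" "1 \<le> S" "S \<le> K-1" "1 \<le> T" "T \<le> K-1" "1 \<le> A \<or> S = 1" "1 \<le> B \<or> T = 1" "12*(K-S)-2 < A" "A \<le> 16*(K-S)-4" "8*(K-T) < B" "B \<le> 12*(K-T)-2"
    "adjI (rci K S A) (rci K T B)"
  shows "(S = T \<and> (B = A+1 \<or> A = B+1)) \<or> (T = S+1 \<and> A = 16*(K-S) - 4 \<and> B = 1) \<or> (S = T+1 \<and> B = 16*(K-T) - 4 \<and> A = 1)"
proof -
  have SK: "S < K" and TK: "T < K" using assms by linarith+
  show ?thesis using assms(12) unfolding rci_3[OF assms(8,9) SK] rci_2[OF assms(10,11) TK] adjI_def fst_conv snd_conv
    using assms(1-11) by smt
qed

lemma R4_32:
  fixes K S T A B :: int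
  assumes "2 \<le> K" "1 \<le> S" "S \<le> K-1" "1 \<le> T" "T \<le> K-1" "1 \<le> A \<or> S = 1" "1 \<le> B \<or> T = 1" "12*(K-S)-2 < A" "A \<le> 16*(K-S)-4" "8*(K-T) < B" "B \<le> 12*(K-T)-2"
    "rci K S A = rci K T B"
  shows "S = T \<and> A = B"
proof -
  have SK: "S < K" and TK: "T < K" using assms by linarith+
  show ?thesis using assms(12) unfolding rci_3[OF assms(8,9) SK] rci_2[OF assms(10,11) TK] prod.inject
    using assms(1-11) by smt
qed

lemma Q2_32:
  fixes K S A :: int
  assumes "2 \<le> K" "1 \<le> S" "S \<le> K-1" "12*(K-S)-2 < A" "A \<le> 16*(K-S)-4" "8*(K-S) < (A+1)" "(A+1) \<le> 12*(K-S)-2" "A < 16*(K-S)-4"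
  shows "adjI (rci K S A) (rci K S (A+1))"
proof -
  have SK: "S < K" using assms by linarith
  show ?thesis unfolding rci_3[OF assms(4,5) SK] rci_2[OF assms(6,7) SK] adjI_def fst_conv snd_conv
    using assms by smt
qed

lemma R3_33:
  fixes K S T A B :: int
  assumes "2 \<le> K" "1 \<le> S" "S \<le> K-1" "1 \<le> T" "T \<le> K-1" "1 \<le> A \<or> S = 1" "1 \<le> B \<or> T = 1" "12*(K-S)-2 < A" "A \<le> 16*(K-S)-4" "12*(K-T)-2 < B" "B \<le> 16*(K-T)-4"
    "adjI (rci K S A) (rci K T B)"
  shows "(S = T \<and> (B = A+1 \<or> A = B+1)) \<or> (T = S+1 \<and> A = 16*(K-S) - 4 \<and> B = 1) \<or> (S = T+1 \<and> B = 16*(K-T) - 4 \<and> A = 1)"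
proof -
  have SK: "S < K" and TK: "T < K" using assms by linarith+
  show ?thesis using assms(12) unfolding rci_3[OF assms(8,9) SK] rci_3[OF assms(10,11) TK] adjI_def fst_conv snd_conv
    using assms(1-11) by smt
qed

lemma R4_33:
  fixes K S T A B :: int
  assumes "2 \<le> K" "1 \<le> S" "S \<le> K-1" "1 \<le> T" "T \<le> K-1" "1 \<le> A \<or> S = 1" "1 \<le> B \<or> T = 1" "12*(K-S)-2 < A" "A \<le> 16*(K-S)-4" "12*(K-T)-2 < B" "B \<le> 16*(K-T)-4"
    "rci K S A = rci K T B"
  shows "S = T \<and> A = B"
proof -
  have SK: "S < K" and TK: "T < K" using assms by linarith+
  show ?thesis using assms(12) unfolding rci_3[OF assms(8,9) SK] rci_3[OF assms(10,11) TK] prod.inject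
    using assms(1-11) by smt
qed

lemma Q2_33:
  fixes K S A :: int
  assumes "2 \<le> K" "1 \<le> S" "S \<le> K-1" "12*(K-S)-2 < A" "A \<le> 16*(K-S)-4" "12*(K-S)-2 < (A+1)" "(A+1) \<le> 16*(K-S)-4" "A < 16*(K-S)-4"
  shows "adjI (rci K S A) (rci K S (A+1))"
proof -
  have SK: "S < K" using assms by linarith
  show ?thesis unfolding rci_3[OF assms(4,5) SK] rci_3[OF assms(6,7) SK] adjI_def fst_conv snd_conv
    using assms by smt
qed

lemma R3I:
  fixes K S T A B :: int
  assumes "2 \<le> K" "1 \<le> S" "S \<le> K-1" "1 \<le> T" "T \<le> K-1" "1 \<le> A \<or> S = 1" "1 \<le> B \<or> T = 1" "0 \<le> A" "A \<le> 16*(K-S)-4" "0 \<le> B" "B \<le> 16*(K-T)-4"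
    "adjI (rci K S A) (rci K T B)"
  shows "(S = T \<and> (B = A+1 \<or> A = B+1)) \<or> (T = S+1 \<and> A = 16*(K-S) - 4 \<and> B = 1) \<or> (S = T+1 \<and> B = 16*(K-T) - 4 \<and> A = 1)"
proof -
  consider (a0) "0 \<le> A" "A \<le> 4*(K-S)" | (a1) "4*(K-S) < A" "A \<le> 8*(K-S)" | (a2) "8*(K-S) < A" "A \<le> 12*(K-S)-2" | (a3) "12*(K-S)-2 < A" "A \<le> 16*(K-S)-4" using assms by linarith
  then show ?thesis
  proof cases
    case a0
    consider (b0) "0 \<le> B" "B \<le> 4*(K-T)" | (b1) "4*(K-T) < B" "B \<le> 8*(K-T)" | (b2) "8*(K-T) < B" "B \<le> 12*(K-T)-2" | (b3) "12*(K-T)-2 < B" "B \<le> 16*(K-T)-4" using assms by linarith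
    then show ?thesis
    proof cases
      case b0
      show ?thesis by (rule R3_00[OF assms(1-7) a0 b0 assms(12)])
    next
      case b1
      show ?thesis by (rule R3_01[OF assms(1-7) a0 b1 assms(12)])
    next
      case b2
      show ?thesis by (rule R3_02[OF assms(1-7) a0 b2 assms(12)])
    next
      case b3
      show ?thesis by (rule R3_03[OF assms(1-7) a0 b3 assms(12)])
    qed
  next
    case a1
    consider (b0) "0 \<le> B" "B \<le> 4*(K-T)" | (b1) "4*(K-T) < B" "B \<le> 8*(K-T)" | (b2) "8*(K-T) < B" "B \<le> 12*(K-T)-2" | (b3) "12*(K-T)-2 < B" "B \<le> 16*(K-T)-4" using assms by linarith
    then show ?thesis
    proof cases
      case b0
      show ?thesis by (rule R3_10[OF assms(1-7) a1 b0 assms(12)])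
    next
      case b1
      show ?thesis by (rule R3_11[OF assms(1-7) a1 b1 assms(12)])
    next
      case b2
      show ?thesis by (rule R3_12[OF assms(1-7) a1 b2 assms(12)])
    next
      case b3
      show ?thesis by (rule R3_13[OF assms(1-7) a1 b3 assms(12)])
    qed
  next
    case a2
    consider (b0) "0 \<le> B" "B \<le> 4*(K-T)" | (b1) "4*(K-T) < B" "B \<le> 8*(K-T)" | (b2) "8*(K-T) < B" "B \<le> 12*(K-T)-2" | (b3) "12*(K-T)-2 < B" "B \<le> 16*(K-T)-4" using assms by linarith
    then show ?thesis
    proof cases
      case b0
      show ?thesis by (rule R3_20[OF assms(1-7) a2 b0 assms(12)])
    next
      case b1
      show ?thesis by (rule R3_21[OF assms(1-7) a2 b1 assms(12)])
    next
      case b2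
      show ?thesis by (rule R3_22[OF assms(1-7) a2 b2 assms(12)])
    next
      case b3
      show ?thesis by (rule R3_23[OF assms(1-7) a2 b3 assms(12)])
    qed
  next
    case a3
    consider (b0) "0 \<le> B" "B \<le> 4*(K-T)" | (b1) "4*(K-T) < B" "B \<le> 8*(K-T)" | (b2) "8*(K-T) < B" "B \<le> 12*(K-T)-2" | (b3) "12*(K-T)-2 < B" "B \<le> 16*(K-T)-4" using assms by linarith
    then show ?thesis
    proof cases
      case b0
      show ?thesis by (rule R3_30[OF assms(1-7) a3 b0 assms(12)])
    next
      case b1
      show ?thesis by (rule R3_31[OF assms(1-7) a3 b1 assms(12)])
    next
      case b2
      show ?thesis by (rule R3_32[OF assms(1-7) a3 b2 assms(12)])
    next
      case b3
      show ?thesis by (rule R3_33[OF assms(1-7) a3 b3 assms(12)])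
    qed
  qed
qed

lemma R4I:
  fixes K S T A B :: int
  assumes "2 \<le> K" "1 \<le> S" "S \<le> K-1" "1 \<le> T" "T \<le> K-1" "1 \<le> A \<or> S = 1" "1 \<le> B \<or> T = 1" "0 \<le> A" "A \<le> 16*(K-S)-4" "0 \<le> B" "B \<le> 16*(K-T)-4"
    "rci K S A = rci K T B"
  shows "S = T \<and> A = B"
proof -
  consider (a0) "0 \<le> A" "A \<le> 4*(K-S)" | (a1) "4*(K-S) < A" "A \<le> 8*(K-S)" | (a2) "8*(K-S) < A" "A \<le> 12*(K-S)-2" | (a3) "12*(K-S)-2 < A" "A \<le> 16*(K-S)-4" using assms by linarith
  then show ?thesis
  proof cases
    case a0
    consider (b0) "0 \<le> B" "B \<le> 4*(K-T)" | (b1) "4*(K-T) < B" "B \<le> 8*(K-T)" | (b2) "8*(K-T) < B" "B \<le> 12*(K-T)-2" | (b3) "12*(K-T)-2 < B" "B \<le> 16*(K-T)-4" using assms by linarith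
    then show ?thesis
    proof cases
      case b0
      show ?thesis by (rule R4_00[OF assms(1-7) a0 b0 assms(12)])
    next
      case b1
      show ?thesis by (rule R4_01[OF assms(1-7) a0 b1 assms(12)])
    next
      case b2
      show ?thesis by (rule R4_02[OF assms(1-7) a0 b2 assms(12)])
    next
      case b3
      show ?thesis by (rule R4_03[OF assms(1-7) a0 b3 assms(12)])
    qed
  next
    case a1
    consider (b0) "0 \<le> B" "B \<le> 4*(K-T)" | (b1) "4*(K-T) < B" "B \<le> 8*(K-T)" | (b2) "8*(K-T) < B" "B \<le> 12*(K-T)-2" | (b3) "12*(K-T)-2 < B" "B \<le> 16*(K-T)-4" using assms by linarith
    then show ?thesis
    proof cases
      case b0
      show ?thesis by (rule R4_10[OF assms(1-7) a1 b0 assms(12)])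
    next
      case b1
      show ?thesis by (rule R4_11[OF assms(1-7) a1 b1 assms(12)])
    next
      case b2
      show ?thesis by (rule R4_12[OF assms(1-7) a1 b2 assms(12)])
    next
      case b3
      show ?thesis by (rule R4_13[OF assms(1-7) a1 b3 assms(12)])
    qed
  next
    case a2
    consider (b0) "0 \<le> B" "B \<le> 4*(K-T)" | (b1) "4*(K-T) < B" "B \<le> 8*(K-T)" | (b2) "8*(K-T) < B" "B \<le> 12*(K-T)-2" | (b3) "12*(K-T)-2 < B" "B \<le> 16*(K-T)-4" using assms by linarith
    then show ?thesis
    proof cases
      case b0
      show ?thesis by (rule R4_20[OF assms(1-7) a2 b0 assms(12)])
    next
      case b1
      show ?thesis by (rule R4_21[OF assms(1-7) a2 b1 assms(12)])
    next
      case b2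
      show ?thesis by (rule R4_22[OF assms(1-7) a2 b2 assms(12)])
    next
      case b3
      show ?thesis by (rule R4_23[OF assms(1-7) a2 b3 assms(12)])
    qed
  next
    case a3
    consider (b0) "0 \<le> B" "B \<le> 4*(K-T)" | (b1) "4*(K-T) < B" "B \<le> 8*(K-T)" | (b2) "8*(K-T) < B" "B \<le> 12*(K-T)-2" | (b3) "12*(K-T)-2 < B" "B \<le> 16*(K-T)-4" using assms by linarith
    then show ?thesis
    proof cases
      case b0
      show ?thesis by (rule R4_30[OF assms(1-7) a3 b0 assms(12)])
    next
      case b1
      show ?thesis by (rule R4_31[OF assms(1-7) a3 b1 assms(12)])
    next
      case b2
      show ?thesis by (rule R4_32[OF assms(1-7) a3 b2 assms(12)])
    next
      case b3
      show ?thesis by (rule R4_33[OF assms(1-7) a3 b3 assms(12)])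
    qed
  qed
qed

lemma Q2I:
  fixes K S A :: int
  assumes "2 \<le> K" "1 \<le> S" "S \<le> K-1" "0 \<le> A" "A < 16*(K-S)-4"
  shows "adjI (rci K S A) (rci K S (A+1))"
proof -
  consider (a0) "0 \<le> A" "A \<le> 4*(K-S)" | (a1) "4*(K-S) < A" "A \<le> 8*(K-S)" | (a2) "8*(K-S) < A" "A \<le> 12*(K-S)-2" | (a3) "12*(K-S)-2 < A" "A \<le> 16*(K-S)-4" using assms by linarith
  then show ?thesis
  proof cases
    case a0
    consider (b0) "0 \<le> (A+1)" "(A+1) \<le> 4*(K-S)" | (b1) "4*(K-S) < (A+1)" "(A+1) \<le> 8*(K-S)" | (b2) "8*(K-S) < (A+1)" "(A+1) \<le> 12*(K-S)-2" | (b3) "12*(K-S)-2 < (A+1)" "(A+1) \<le> 16*(K-S)-4" using assms by linarith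
    then show ?thesis
    proof cases
      case b0
      show ?thesis by (rule Q2_00[OF assms(1-3) a0 b0 assms(5)])
    next
      case b1
      show ?thesis by (rule Q2_01[OF assms(1-3) a0 b1 assms(5)])
    next
      case b2
      show ?thesis by (rule Q2_02[OF assms(1-3) a0 b2 assms(5)])
    next
      case b3
      show ?thesis by (rule Q2_03[OF assms(1-3) a0 b3 assms(5)])
    qed
  next
    case a1
    consider (b0) "0 \<le> (A+1)" "(A+1) \<le> 4*(K-S)" | (b1) "4*(K-S) < (A+1)" "(A+1) \<le> 8*(K-S)" | (b2) "8*(K-S) < (A+1)" "(A+1) \<le> 12*(K-S)-2" | (b3) "12*(K-S)-2 < (A+1)" "(A+1) \<le> 16*(K-S)-4" using assms by linarith
    then show ?thesis
    proof cases
      case b0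
      show ?thesis by (rule Q2_10[OF assms(1-3) a1 b0 assms(5)])
    next
      case b1
      show ?thesis by (rule Q2_11[OF assms(1-3) a1 b1 assms(5)])
    next
      case b2
      show ?thesis by (rule Q2_12[OF assms(1-3) a1 b2 assms(5)])
    next
      case b3
      show ?thesis by (rule Q2_13[OF assms(1-3) a1 b3 assms(5)])
    qed
  next
    case a2
    consider (b0) "0 \<le> (A+1)" "(A+1) \<le> 4*(K-S)" | (b1) "4*(K-S) < (A+1)" "(A+1) \<le> 8*(K-S)" | (b2) "8*(K-S) < (A+1)" "(A+1) \<le> 12*(K-S)-2" | (b3) "12*(K-S)-2 < (A+1)" "(A+1) \<le> 16*(K-S)-4" using assms by linarith
    then show ?thesis
    proof cases
      case b0
      show ?thesis by (rule Q2_20[OF assms(1-3) a2 b0 assms(5)])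
    next
      case b1
      show ?thesis by (rule Q2_21[OF assms(1-3) a2 b1 assms(5)])
    next
      case b2
      show ?thesis by (rule Q2_22[OF assms(1-3) a2 b2 assms(5)])
    next
      case b3
      show ?thesis by (rule Q2_23[OF assms(1-3) a2 b3 assms(5)])
    qed
  next
    case a3
    consider (b0) "0 \<le> (A+1)" "(A+1) \<le> 4*(K-S)" | (b1) "4*(K-S) < (A+1)" "(A+1) \<le> 8*(K-S)" | (b2) "8*(K-S) < (A+1)" "(A+1) \<le> 12*(K-S)-2" | (b3) "12*(K-S)-2 < (A+1)" "(A+1) \<le> 16*(K-S)-4" using assms by linarith
    then show ?thesis
    proof cases
      case b0
      show ?thesis by (rule Q2_30[OF assms(1-3) a3 b0 assms(5)])
    next
      case b1
      show ?thesis by (rule Q2_31[OF assms(1-3) a3 b1 assms(5)])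
    next
      case b2
      show ?thesis by (rule Q2_32[OF assms(1-3) a3 b2 assms(5)])
    next
      case b3
      show ?thesis by (rule Q2_33[OF assms(1-3) a3 b3 assms(5)])
    qed
  qed
qed

lemma rci_bounds:
  fixes K S A :: int
  assumes "2 \<le> K" "1 \<le> S" "S \<le> K-1" "0 \<le> A" "A \<le> 16*(K-S)-4"
  shows "1 \<le> fst (rci K S A) \<and> fst (rci K S A) \<le> 4*K-3 \<and> 1 \<le> snd (rci K S A) \<and> snd (rci K S A) \<le> 4*K-3"
proof -
  have SK: "S < K" using assms by linarith
  consider "0 \<le> A" "A \<le> 4*(K-S)" | "4*(K-S) < A" "A \<le> 8*(K-S)" | "8*(K-S) < A" "A \<le> 12*(K-S)-2"
    | "12*(K-S)-2 < A" "A \<le> 16*(K-S)-4" using assms by linarith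
  then show ?thesis
  proof cases
    case 1 show ?thesis unfolding rci_0[OF 1 SK] using 1 assms by simp
  next
    case 2 show ?thesis unfolding rci_1[OF 2 SK] using 2 assms by simp
  next
    case 3 show ?thesis unfolding rci_2[OF 3 SK] using 3 assms by simp
  next
    case 4 show ?thesis unfolding rci_3[OF 4 SK] using 4 assms by simp
  qed
qed

definition L :: "nat \<Rightarrow> nat \<Rightarrow> nat" where "L k s = 16*(k-s) - 4"

definition rc :: "nat \<Rightarrow> nat \<Rightarrow> nat \<Rightarrow> nat \<times> nat" where
  "rc k s \<alpha> = (if \<alpha> \<le> 4*(k-s) then (2*s-1, 2*s-1+\<alpha>)
      else if \<alpha> \<le> 8*(k-s) then ((6*s+\<alpha>) - (4*k+1), 4*k-2*s-1)
      else if \<alpha> \<le> 12*(k-s)-2 then (4*k-2*s-1, 12*k - (10*s+1+\<alpha>))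
      else (16*k - (14*s+3+\<alpha>), 2*s+1))"

definition adj :: "nat \<times> nat \<Rightarrow> nat \<times> nat \<Rightarrow> bool" where
  "adj c d \<longleftrightarrow> (fst c = fst d \<and> (snd d = snd c + 1 \<or> snd c = snd d + 1)) \<or>
                (snd c = snd d \<and> (fst d = fst c + 1 \<or> fst c = fst d + 1))"

abbreviation ip :: "nat \<times> nat \<Rightarrow> int \<times> int" where "ip \<equiv> map_prod int int"

lemma rc_rci:
  assumes "1 \<le> s" "s < k" "a \<le> L k s"
  shows "ip (rc k s a) = rci (int k) (int s) (int a)"
proof -
  consider "a \<le> 4*(k-s)" | "4*(k-s) < a" "a \<le> 8*(k-s)" | "8*(k-s) < a" "a \<le> 12*(k-s)-2" 
    | "12*(k-s)-2 < a" using assms by linarith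
  then show ?thesis
  proof cases
    case 1
    then have "rc k s a = (2*s-1, 2*s-1+a)" by (simp add: rc_def)
    moreover have "rci (int k) (int s) (int a) = (2*int s-1, 2*int s-1+int a)"
      by (rule rci_0) (use 1 assms in \<open>auto simp: of_nat_diff\<close>)
    ultimately show ?thesis using assms by (simp add: of_nat_diff)
  next
    case 2
    then have "rc k s a = ((6*s+a) - (4*k+1), 4*k-2*s-1)" by (simp add: rc_def)
    moreover have "rci (int k) (int s) (int a) = (6*int s+int a - (4*int k+1), 4*int k-2*int s-1)"
      by (rule rci_1) (use 2 assms in \<open>auto simp: of_nat_diff\<close>)
    ultimately show ?thesis using assms 2 by (simp add: of_nat_diff)
  next
    case 3
    then have "rc k s a = (4*k-2*s-1, 12*k - (10*s+1+a))" by (simp add: rc_def)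
    moreover have "rci (int k) (int s) (int a) = (4*int k-2*int s-1, 12*int k - (10*int s+1+int a))"
      by (rule rci_2) (use 3 assms in \<open>auto simp: of_nat_diff\<close>)
    ultimately show ?thesis using assms 3 by (simp add: of_nat_diff)
  next
    case 4
    then have "rc k s a = (16*k - (14*s+3+a), 2*s+1)" using assms by (auto simp: rc_def)
    moreover have "rci (int k) (int s) (int a) = (16*int k - (14*int s+3+int a), 2*int s+1)"
      by (rule rci_3) (use 4 assms in \<open>auto simp: of_nat_diff L_def\<close>)
    ultimately show ?thesis using assms 4 by (simp add: of_nat_diff L_def)
  qed
qed

lemma adj_adjI: "adj c d \<longleftrightarrow> adjI (ip c) (ip d)"
  unfolding adj_def adjI_def by (cases c; cases d) auto


lemma ip_eq: "ip c = ip d \<longleftrightarrow> c = d"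
  by (cases c; cases d) auto

lemma L_int: "s < k \<Longrightarrow> int (L k s) = 16*(int k - int s) - 4"
  unfolding L_def by (simp add: of_nat_diff)

lemma R3:
  assumes "2 \<le> k" "1 \<le> s" "s \<le> k-1" "1 \<le> t" "t \<le> k-1" "a \<le> L k s" "b \<le> L k t"
    "1 \<le> a \<or> s = 1" "1 \<le> b \<or> t = 1" "adj (rc k s a) (rc k t b)"
  shows "(s = t \<and> (b = a+1 \<or> a = b+1)) \<or> (t = s+1 \<and> a = L k s \<and> b = 1) \<or> (s = t+1 \<and> b = L k t \<and> a = 1)"
proof -
  have sk: "s < k" "t < k" using assms by auto
  have A: "adjI (rci (int k) (int s) (int a)) (rci (int k) (int t) (int b))"
    using assms(10) unfolding adj_adjI rc_rci[OF assms(2) sk(1) assms(6)] rc_rci[OF assms(4) sk(2) assms(7)] .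
  have p: "2 \<le> int k" "1 \<le> int s" "int s \<le> int k - 1" "1 \<le> int t" "int t \<le> int k - 1"
    "1 \<le> int a \<or> int s = 1" "1 \<le> int b \<or> int t = 1" "0 \<le> int a" "0 \<le> int b"
    using assms by auto
  have q: "int a \<le> 16*(int k - int s) - 4" "int b \<le> 16*(int k - int t) - 4"
    using assms(6,7) L_int[OF sk(1)] L_int[OF sk(2)] by linarith+
  have "(int s = int t \<and> (int b = int a+1 \<or> int a = int b+1)) \<or> (int t = int s+1 \<and> int a = 16*(int k-int s) - 4 \<and> int b = 1) \<or> (int s = int t+1 \<and> int b = 16*(int k-int t) - 4 \<and> int a = 1)"
    by (rule R3I[OF p(1-7) p(8) q(1) p(9) q(2) A])
  then have "(int s = int t \<and> (int b = int a+1 \<or> int a = int b+1)) \<or> (int t = int s+1 \<and> int a = int (L k s) \<and> int b = 1) \<or> (int s = int t+1 \<and> int b = int (L k t) \<and> int a = 1)"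
    unfolding L_int[OF sk(1)] L_int[OF sk(2)] .
  then show ?thesis by linarith
qed

lemma R4:
  assumes "2 \<le> k" "1 \<le> s" "s \<le> k-1" "1 \<le> t" "t \<le> k-1" "a \<le> L k s" "b \<le> L k t"
    "1 \<le> a \<or> s = 1" "1 \<le> b \<or> t = 1" "rc k s a = rc k t b"
  shows "s = t \<and> a = b"
proof -
  have sk: "s < k" "t < k" using assms by auto
  have A: "rci (int k) (int s) (int a) = rci (int k) (int t) (int b)"
    using arg_cong[OF assms(10), of ip] unfolding rc_rci[OF assms(2) sk(1) assms(6)] rc_rci[OF assms(4) sk(2) assms(7)] .
  have p: "2 \<le> int k" "1 \<le> int s" "int s \<le> int k - 1" "1 \<le> int t" "int t \<le> int k - 1"
    "1 \<le> int a \<or> int s = 1" "1 \<le> int b \<or> int t = 1" "0 \<le> int a" "0 \<le> int b"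
    using assms by auto
  have q: "int a \<le> 16*(int k - int s) - 4" "int b \<le> 16*(int k - int t) - 4"
    using assms(6,7) L_int[OF sk(1)] L_int[OF sk(2)] by linarith+
  have "int s = int t \<and> int a = int b"
    by (rule R4I[OF p(1-7) p(8) q(1) p(9) q(2) A])
  then show ?thesis by simp
qed

lemma Q2r:
  assumes "2 \<le> k" "1 \<le> s" "s \<le> k-1" "a < L k s"
  shows "adj (rc k s a) (rc k s (a+1))"
proof -
  have sk: "s < k" using assms by auto
  have A: "adjI (rci (int k) (int s) (int a)) (rci (int k) (int s) (int a + 1))"
    by (rule Q2I) (use assms L_int[OF sk] in \<open>auto\<close>)
  have e1: "ip (rc k s a) = rci (int k) (int s) (int a)" using rc_rci[OF assms(2) sk, of a] assms(4) by simp
  have "ip (rc k s (a+1)) = rci (int k) (int s) (int (a+1))" using rc_rci[OF assms(2) sk, of "a+1"] assms(4) by simp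
  moreover have "int (a+1) = int a + 1" by simp
  ultimately have e2: "ip (rc k s (a+1)) = rci (int k) (int s) (int a + 1)" by metis
  show ?thesis unfolding adj_adjI e1 e2 by (rule A)
qed

lemma rc_bounds:
  assumes "2 \<le> k" "1 \<le> s" "s \<le> k-1" "a \<le> L k s"
  shows "1 \<le> fst (rc k s a) \<and> fst (rc k s a) \<le> 4*k-3 \<and> 1 \<le> snd (rc k s a) \<and> snd (rc k s a) \<le> 4*k-3"
proof -
  have sk: "s < k" using assms by auto
  have "1 \<le> fst (rci (int k) (int s) (int a)) \<and> fst (rci (int k) (int s) (int a)) \<le> 4*int k-3 \<and> 1 \<le> snd (rci (int k) (int s) (int a)) \<and> snd (rci (int k) (int s) (int a)) \<le> 4*int k-3"
    by (rule rci_bounds) (use assms L_int[OF sk] in \<open>auto\<close>)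
  then have "1 \<le> int (fst (rc k s a)) \<and> int (fst (rc k s a)) \<le> 4*int k-3 \<and> 1 \<le> int (snd (rc k s a)) \<and> int (snd (rc k s a)) \<le> 4*int k-3"
    unfolding rc_rci[OF assms(2) sk assms(4), symmetric] by (cases "rc k s a") simp
  then show ?thesis by linarith
qed

lemma rc_0: "rc k s 0 = (2*s-1, 2*s-1)" by (simp add: rc_def)

lemma rc_boundary:
  assumes "2 \<le> s" "s \<le> k-1"
  shows "rc k (s-1) (L k (s-1)) = rc k s 0"
proof -
  have sk: "s-1 < k" "1 \<le> s-1" using assms by auto
  have Li: "int (L k (s-1)) = 16*(int k - int (s-1)) - 4" by (rule L_int[OF sk(1)])
  have "ip (rc k (s-1) (L k (s-1))) = rci (int k) (int (s-1)) (int (L k (s-1)))"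
    by (rule rc_rci) (use sk in auto)
  also have "\<dots> = (16*int k - (14*int (s-1)+3+int (L k (s-1))), 2*int (s-1)+1)"
    by (rule rci_3) (use Li sk in auto)
  also have "\<dots> = ip (rc k s 0)" unfolding rc_0 Li using assms by (simp add: of_nat_diff)
  finally show ?thesis by (simp add: ip_eq)
qed

lemma psum_Suc: "psum k (Suc s) = psum k s + (16*(k - Suc s) - 4)"
  unfolding psum_def by simp

lemma psum_0: "psum k 0 = 0" unfolding psum_def by simp

lemma psum_L: "1 \<le> s \<Longrightarrow> psum k s = psum k (s-1) + L k s"
  using psum_Suc[of k "s-1"] unfolding L_def by simp

lemma psum_mono: "a \<le> b \<Longrightarrow> psum k a \<le> psum k b"
  unfolding psum_def by (rule sum_mono2) auto

lemma L_pos: "s < k \<Longrightarrow> 12 \<le> L k s" unfolding L_def by simp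

lemma psum_strict: "s < t \<Longrightarrow> t < k \<Longrightarrow> psum k s < psum k t"
proof (induction t)
  case 0 then show ?case by simp
next
  case (Suc t)
  have "psum k (Suc t) = psum k t + L k (Suc t)" using psum_L[of "Suc t" k] by simp
  moreover have "12 \<le> L k (Suc t)" using Suc.prems L_pos by simp
  moreover have "psum k s \<le> psum k t" using Suc.prems psum_mono by simp
  ultimately show ?case by linarith
qed

lemma sidx_eq:
  assumes "1 \<le> s" "s \<le> k-1" "psum k (s-1) < i" "i \<le> psum k s"
  shows "sidx k i = s"
  unfolding sidx_def
proof (rule the_equality)
  show "s \<in> {1..k-1} \<and> psum k (s-1) < i \<and> i \<le> psum k s" using assms by auto
next
  fix s' assume h: "s' \<in> {1..k-1} \<and> psum k (s'-1) < i \<and> i \<le> psum k s'"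
  show "s' = s"
  proof (rule ccontr)
    assume "s' \<noteq> s"
    then consider "s' < s" | "s < s'" by linarith
    then show False
    proof cases
      case 1 then have "psum k s' \<le> psum k (s-1)" by (intro psum_mono) simp
      then show False using h assms by linarith
    next
      case 2 then have "psum k s \<le> psum k (s'-1)" by (intro psum_mono) simp
      then show False using h assms by linarith
    qed
  qed
qed

lemma sidx_ex:
  "1 \<le> i \<Longrightarrow> i \<le> psum k t \<Longrightarrow> \<exists>s. 1 \<le> s \<and> s \<le> t \<and> psum k (s-1) < i \<and> i \<le> psum k s"
proof (induction t)
  case 0 then show ?case by (simp add: psum_0)
next
  case (Suc t)
  show ?case
  proof (cases "i \<le> psum k t")
    case True then show ?thesis using Suc by force
  next
    case False then show ?thesis using Suc.prems by (intro exI[of _ "Suc t"]) auto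
  qed
qed

definition pc :: "nat \<Rightarrow> nat \<Rightarrow> nat \<times> nat" where
  "pc k m = (if m = 0 then (1,1) else rc k (sidx k m) (m - psum k (sidx k m - 1)))"

lemma PC:
  assumes "2 \<le> k" "1 \<le> s" "s \<le> k-1" "a \<le> L k s"
  shows "pc k (psum k (s-1) + a) = rc k s a"
proof (cases "a = 0")
  case False
  have "psum k s = psum k (s-1) + L k s" using psum_L assms by simp
  then have "sidx k (psum k (s-1) + a) = s" using assms False by (intro sidx_eq) auto
  then show ?thesis using False unfolding pc_def by simp
next
  case True
  show ?thesis
  proof (cases "s = 1")
    case True
    then show ?thesis using \<open>a = 0\<close> by (simp add: pc_def psum_0 rc_0)
  next
    case False
    then have s2: "2 \<le> s" using assms by simp
    have e: "psum k (s-1) = psum k (s-1-1) + L k (s-1)" using psum_L[of "s-1" k] s2 by simp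
    have "L k (s-1) \<ge> 12" using L_pos assms by simp
    then have "sidx k (psum k (s-1)) = s-1" using assms s2 e by (intro sidx_eq) auto
    then have "pc k (psum k (s-1)) = rc k (s-1) (L k (s-1))"
      unfolding pc_def using e \<open>L k (s-1) \<ge> 12\<close> by simp
    then show ?thesis using rc_boundary[OF s2 assms(3)] True by simp
  qed
qed

lemma T1_psum: "T1 k = psum k (k-1)" by (simp add: T1_def)

lemma rep:
  assumes "2 \<le> k" "m \<le> T1 k"
  shows "\<exists>s a. 1 \<le> s \<and> s \<le> k-1 \<and> a \<le> L k s \<and> (1 \<le> a \<or> s = 1) \<and> m = psum k (s-1) + a"
proof (cases "m = 0")
  case True then show ?thesis using assms by (intro exI[of _ 1] exI[of _ 0]) (auto simp: psum_0)
next
  case False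
  then obtain s where s: "1 \<le> s" "s \<le> k-1" "psum k (s-1) < m" "m \<le> psum k s"
    using sidx_ex[of m k "k-1"] assms by (auto simp: T1_psum)
  then show ?thesis using psum_L[of s k] by (intro exI[of _ s] exI[of _ "m - psum k (s-1)"]) auto
qed

lemma rc_eqI:
  assumes "1 \<le> s" "s < k" "a \<le> L k s" "rci (int k) (int s) (int a) = (X, Y)" "int x = X" "int y = Y"
  shows "rc k s a = (x, y)"
proof -
  have "ip (rc k s a) = ip (x, y)" using rc_rci[OF assms(1-3)] assms(4-6) by simp
  then show ?thesis by (cases "rc k s a") simp
qed

lemma fam1:
  assumes "2 \<le> k" "1 \<le> s" "s \<le> k-1" "a < 4*(k-s)"
  shows "rc k s a = (2*s-1, 2*s-1+a) \<and> rc k s (a+1) = (2*s-1, 2*s+a)"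
proof -
  have sk: "s < k" using assms by simp
  have Li: "int (L k s) = 16*(int k - int s) - 4" by (rule L_int[OF sk])
  have "rc k s a = (2*s-1, 2*s-1+a)"
    by (rule rc_eqI[OF assms(2) sk _ rci_0]) (use assms Li in \<open>auto simp: of_nat_diff\<close>)
  moreover have "rc k s (a+1) = (2*s-1, 2*s+a)"
    by (rule rc_eqI[OF assms(2) sk _ rci_0]) (use assms Li in \<open>auto simp: of_nat_diff\<close>)
  ultimately show ?thesis by simp
qed

lemma fam2:
  assumes "2 \<le> k" "1 \<le> s" "s \<le> k-1" "4*(k-s) \<le> a" "a < 8*(k-s)"
  shows "rc k s a = (6*s+a-(4*k+1), 4*k-2*s-1) \<and> rc k s (a+1) = (6*s+a-4*k, 4*k-2*s-1)"
proof -
  have sk: "s < k" using assms by simp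
  have Li: "int (L k s) = 16*(int k - int s) - 4" by (rule L_int[OF sk])
  have "rc k s a = (6*s+a-(4*k+1), 4*k-2*s-1)"
  proof (cases "a = 4*(k-s)")
    case True
    show ?thesis
      by (rule rc_eqI[OF assms(2) sk _ rci_0]) (use assms Li True in \<open>auto simp: of_nat_diff\<close>)
  next
    case False
    show ?thesis
      by (rule rc_eqI[OF assms(2) sk _ rci_1]) (use assms Li False in \<open>auto simp: of_nat_diff\<close>)
  qed
  moreover have "rc k s (a+1) = (6*s+a-4*k, 4*k-2*s-1)"
    by (rule rc_eqI[OF assms(2) sk _ rci_1]) (use assms Li in \<open>auto simp: of_nat_diff\<close>)
  ultimately show ?thesis by simp
qed

lemma fam3:
  assumes "2 \<le> k" "1 \<le> s" "s \<le> k-1" "8*(k-s) \<le> a" "a < 12*(k-s)-2"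
  shows "rc k s a = (4*k-2*s-1, 12*k-(10*s+1+a)) \<and> rc k s (a+1) = (4*k-2*s-1, 12*k-(10*s+2+a))"
proof -
  have sk: "s < k" using assms by simp
  have Li: "int (L k s) = 16*(int k - int s) - 4" by (rule L_int[OF sk])
  have "rc k s a = (4*k-2*s-1, 12*k-(10*s+1+a))"
  proof (cases "a = 8*(k-s)")
    case True
    show ?thesis
      by (rule rc_eqI[OF assms(2) sk _ rci_1]) (use assms Li True in \<open>auto simp: of_nat_diff\<close>)
  next
    case False
    show ?thesis
      by (rule rc_eqI[OF assms(2) sk _ rci_2]) (use assms Li False in \<open>auto simp: of_nat_diff\<close>)
  qed
  moreover have "rc k s (a+1) = (4*k-2*s-1, 12*k-(10*s+2+a))"
    by (rule rc_eqI[OF assms(2) sk _ rci_2]) (use assms Li in \<open>auto simp: of_nat_diff\<close>)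
  ultimately show ?thesis by simp
qed

lemma fam4:
  assumes "2 \<le> k" "1 \<le> s" "s \<le> k-1" "12*(k-s)-2 \<le> a" "a < 16*(k-s)-4"
  shows "rc k s a = (16*k-(14*s+3+a), 2*s+1) \<and> rc k s (a+1) = (16*k-(14*s+4+a), 2*s+1)"
proof -
  have sk: "s < k" using assms by simp
  have Li: "int (L k s) = 16*(int k - int s) - 4" by (rule L_int[OF sk])
  have "rc k s a = (16*k-(14*s+3+a), 2*s+1)"
  proof (cases "a = 12*(k-s)-2")
    case True
    show ?thesis
      by (rule rc_eqI[OF assms(2) sk _ rci_2]) (use assms Li True in \<open>auto simp: of_nat_diff\<close>)
  next
    case False
    show ?thesis
      by (rule rc_eqI[OF assms(2) sk _ rci_3]) (use assms Li False in \<open>auto simp: of_nat_diff\<close>)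
  qed
  moreover have "rc k s (a+1) = (16*k-(14*s+4+a), 2*s+1)"
    by (rule rc_eqI[OF assms(2) sk _ rci_3]) (use assms Li in \<open>auto simp: of_nat_diff\<close>)
  ultimately show ?thesis by simp
qed

definition cv :: "nat \<times> nat \<Rightarrow> vert set" where
  "cv c = {v 1 (fst c), v 2 (snd c), v 3 1}"

definition tri :: "nat \<times> nat \<Rightarrow> nat \<times> nat \<Rightarrow> vert set" where
  "tri c d = {v 1 (fst c), v 1 (fst d), v 2 (snd c), v 2 (snd d)}"

lemma ring_sub:
  assumes "2 \<le> k" "1 \<le> s" "s \<le> k-1"
  shows "E1 k s \<union> E2 k s \<union> E3 k s \<union> E4 k s \<subseteq> {tri (rc k s a) (rc k s (a+1)) | a. a < L k s}"
proof
  fix x assume "x \<in> E1 k s \<union> E2 k s \<union> E3 k s \<union> E4 k s"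
  then consider (1) "x \<in> E1 k s" | (2) "x \<in> E2 k s" | (3) "x \<in> E3 k s" | (4) "x \<in> E4 k s" by blast
  then show "x \<in> {tri (rc k s a) (rc k s (a+1)) | a. a < L k s}"
  proof cases
    case 1
    then obtain j where j: "x = {v 1 (2*s-1), v 2 j, v 2 (j+1)}" "2*s-1 \<le> j" "j \<le> 4*k-2-2*s"
      unfolding E1_def by auto
    define a where "a = j - (2*s-1)"
    have a: "a < 4*(k-s)" "2*s-1+a = j" "2*s+a = j+1" using j assms unfolding a_def by auto
    have "x = tri (rc k s a) (rc k s (a+1))"
      using fam1[OF assms a(1)] a j(1) by (simp add: tri_def)
    moreover have "a < L k s" using a assms unfolding L_def by linarith
    ultimately show ?thesis by blast
  next
    case 2
    then obtain j where j: "x = {v 1 j, v 1 (j+1), v 2 (4*k-1-2*s)}" "2*s-1 \<le> j" "j \<le> 4*k-2-2*s"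
      unfolding E2_def by auto
    define a where "a = j + 4*k + 1 - 6*s"
    have a: "4*(k-s) \<le> a" "a < 8*(k-s)" "6*s+a-(4*k+1) = j" "6*s+a-4*k = j+1" "4*k-2*s-1 = 4*k-1-2*s"
      using j assms unfolding a_def by auto
    have "x = tri (rc k s a) (rc k s (a+1))"
      using fam2[OF assms a(1,2)] a j(1) by (simp add: tri_def)
    moreover have "a < L k s" using a assms unfolding L_def by linarith
    ultimately show ?thesis by blast
  next
    case 3
    then obtain j where j: "x = {v 1 (4*k-1-2*s), v 2 j, v 2 (j+1)}" "2*s+1 \<le> j" "j \<le> 4*k-2-2*s"
      unfolding E3_def by auto
    define a where "a = 12*k - 10*s - 2 - j"
    have a: "8*(k-s) \<le> a" "a < 12*(k-s)-2" "12*k-(10*s+1+a) = j+1" "12*k-(10*s+2+a) = j" "4*k-2*s-1 = 4*k-1-2*s"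
      using j assms unfolding a_def by auto
    have "x = tri (rc k s a) (rc k s (a+1))"
      using fam3[OF assms a(1,2)] a j(1) by (auto simp: tri_def)
    moreover have "a < L k s" using a assms unfolding L_def by linarith
    ultimately show ?thesis by blast
  next
    case 4
    then obtain j where j: "x = {v 1 j, v 1 (j+1), v 2 (2*s+1)}" "2*s+1 \<le> j" "j \<le> 4*k-2-2*s"
      unfolding E4_def by auto
    define a where "a = 16*k - 14*s - 4 - j"
    have a: "12*(k-s)-2 \<le> a" "a < 16*(k-s)-4" "16*k-(14*s+3+a) = j+1" "16*k-(14*s+4+a) = j"
      using j assms unfolding a_def by auto
    have "x = tri (rc k s a) (rc k s (a+1))"
      using fam4[OF assms a(1,2)] a j(1) by (auto simp: tri_def)
    moreover have "a < L k s" using a assms unfolding L_def by linarith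
    ultimately show ?thesis by blast
  qed
qed

lemma ring_sup:
  assumes "2 \<le> k" "1 \<le> s" "s \<le> k-1" "a < L k s"
  shows "tri (rc k s a) (rc k s (a+1)) \<in> E1 k s \<union> E2 k s \<union> E3 k s \<union> E4 k s"
proof -
  consider "a < 4*(k-s)" | "4*(k-s) \<le> a" "a < 8*(k-s)" | "8*(k-s) \<le> a" "a < 12*(k-s)-2"
    | "12*(k-s)-2 \<le> a" "a < 16*(k-s)-4" using assms unfolding L_def by linarith
  then show ?thesis
  proof cases
    case 1
    have "tri (rc k s a) (rc k s (a+1)) = {v 1 (2*s-1), v 2 (2*s-1+a), v 2 (2*s-1+a+1)}"
      using fam1[OF assms(1-3) 1] assms by (simp add: tri_def)
    moreover have "2*s-1+a \<in> {2*s-1..4*k-2-2*s}" using 1 assms by auto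
    ultimately have "tri (rc k s a) (rc k s (a+1)) \<in> E1 k s" unfolding E1_def by blast
    then show ?thesis by blast
  next
    case 2
    have "tri (rc k s a) (rc k s (a+1)) = {v 1 (6*s+a-(4*k+1)), v 1 (6*s+a-(4*k+1)+1), v 2 (4*k-1-2*s)}"
    proof -
      have "6*s+a-4*k = 6*s+a-(4*k+1)+1" using 2 assms by linarith
      then show ?thesis using fam2[OF assms(1-3) 2] by (simp add: tri_def)
    qed
    moreover have "6*s+a-(4*k+1) \<in> {2*s-1..4*k-2-2*s}" using 2 assms by auto
    ultimately have "tri (rc k s a) (rc k s (a+1)) \<in> E2 k s" unfolding E2_def by blast
    then show ?thesis by blast
  next
    case 3
    have "tri (rc k s a) (rc k s (a+1)) = {v 1 (4*k-1-2*s), v 2 (12*k-(10*s+2+a)), v 2 (12*k-(10*s+2+a)+1)}"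
    proof -
      have "12*k-(10*s+1+a) = 12*k-(10*s+2+a)+1" using 3 assms by linarith
      then show ?thesis using fam3[OF assms(1-3) 3] by (auto simp: tri_def)
    qed
    moreover have "12*k-(10*s+2+a) \<in> {2*s+1..4*k-2-2*s}" using 3 assms by auto
    ultimately have "tri (rc k s a) (rc k s (a+1)) \<in> E3 k s" unfolding E3_def by blast
    then show ?thesis by blast
  next
    case 4
    have "tri (rc k s a) (rc k s (a+1)) = {v 1 (16*k-(14*s+4+a)), v 1 (16*k-(14*s+4+a)+1), v 2 (2*s+1)}"
    proof -
      have "16*k-(14*s+3+a) = 16*k-(14*s+4+a)+1" using 4 assms by linarith
      then show ?thesis using fam4[OF assms(1-3) 4] by (auto simp: tri_def)
    qed
    moreover have "16*k-(14*s+4+a) \<in> {2*s+1..4*k-2-2*s}" using 4 assms by auto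
    ultimately have "tri (rc k s a) (rc k s (a+1)) \<in> E4 k s" unfolding E4_def by blast
    then show ?thesis by blast
  qed
qed

lemma pc_rep:
  assumes "2 \<le> k" "m \<le> T1 k"
  obtains s a where "1 \<le> s" "s \<le> k-1" "a \<le> L k s" "1 \<le> a \<or> s = 1" "m = psum k (s-1) + a"
    "pc k m = rc k s a"
  using rep[OF assms] PC[OF assms(1)] by blast

lemma psum_le_T: "s \<le> k-1 \<Longrightarrow> psum k s \<le> T1 k"
  unfolding T1_psum by (rule psum_mono)

lemma Q1:
  assumes "2 \<le> k" "m \<le> T1 k"
  shows "1 \<le> fst (pc k m) \<and> fst (pc k m) \<le> 4*k-3 \<and> 1 \<le> snd (pc k m) \<and> snd (pc k m) \<le> 4*k-3"
proof -
  obtain s a where "1 \<le> s" "s \<le> k-1" "a \<le> L k s" "pc k m = rc k s a" using pc_rep[OF assms] by metis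
  then show ?thesis using rc_bounds[OF assms(1)] by simp
qed

lemma Q2:
  assumes "2 \<le> k" "m < T1 k"
  shows "adj (pc k m) (pc k (m+1))"
proof -
  obtain s b where sb: "1 \<le> s" "s \<le> k-1" "b \<le> L k s" "1 \<le> b \<or> s = 1" "m+1 = psum k (s-1) + b"
    using rep[OF assms(1), of "m+1"] assms by auto
  have b1: "1 \<le> b" using sb by (auto simp: psum_0)
  have "m = psum k (s-1) + (b-1)" using sb b1 by simp
  then have "pc k m = rc k s (b-1)" using PC[OF assms(1) sb(1,2), of "b-1"] sb by simp
  moreover have "pc k (m+1) = rc k s (b-1+1)" using PC[OF assms(1) sb(1,2,3)] sb b1 by simp
  moreover have "adj (rc k s (b-1)) (rc k s (b-1+1))" using Q2r[OF assms(1) sb(1,2), of "b-1"] sb b1 by simp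
  ultimately show ?thesis by simp
qed

lemma Q3:
  assumes "2 \<le> k" "m \<le> T1 k" "m' \<le> T1 k" "adj (pc k m) (pc k m')"
  shows "m' = m+1 \<or> m = m'+1"
proof -
  obtain s a where A: "1 \<le> s" "s \<le> k-1" "a \<le> L k s" "1 \<le> a \<or> s = 1" "m = psum k (s-1) + a"
    "pc k m = rc k s a" using pc_rep[OF assms(1,2)] by metis
  obtain t b where B: "1 \<le> t" "t \<le> k-1" "b \<le> L k t" "1 \<le> b \<or> t = 1" "m' = psum k (t-1) + b"
    "pc k m' = rc k t b" using pc_rep[OF assms(1,3)] by metis
  have "(s = t \<and> (b = a+1 \<or> a = b+1)) \<or> (t = s+1 \<and> a = L k s \<and> b = 1) \<or> (s = t+1 \<and> b = L k t \<and> a = 1)"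
    using R3[OF assms(1) A(1,2) B(1,2) A(3) B(3) A(4) B(4)] assms(4) A(6) B(6) by simp
  moreover have "psum k s = psum k (s-1) + L k s" "psum k t = psum k (t-1) + L k t"
    using psum_L A(1) B(1) by auto
  ultimately show ?thesis using A(5) B(5) by auto
qed

lemma Q4:
  assumes "2 \<le> k" "m \<le> T1 k" "m' \<le> T1 k" "pc k m = pc k m'"
  shows "m = m'"
proof -
  obtain s a where A: "1 \<le> s" "s \<le> k-1" "a \<le> L k s" "1 \<le> a \<or> s = 1" "m = psum k (s-1) + a"
    "pc k m = rc k s a" using pc_rep[OF assms(1,2)] by metis
  obtain t b where B: "1 \<le> t" "t \<le> k-1" "b \<le> L k t" "1 \<le> b \<or> t = 1" "m' = psum k (t-1) + b"
    "pc k m' = rc k t b" using pc_rep[OF assms(1,3)] by metis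
  have "s = t \<and> a = b"
    using R4[OF assms(1) A(1,2) B(1,2) A(3) B(3) A(4) B(4)] assms(4) A(6) B(6) by simp
  then show ?thesis using A(5) B(5) by simp
qed

lemma Q5:
  assumes "2 \<le> k"
  shows "EE k = {tri (pc k m) (pc k (m+1)) | m. m < T1 k}"
proof
  show "EE k \<subseteq> {tri (pc k m) (pc k (m+1)) | m. m < T1 k}"
  proof
    fix x assume "x \<in> EE k"
    then obtain s where s: "s \<in> {1..k-1}" "x \<in> E1 k s \<union> E2 k s \<union> E3 k s \<union> E4 k s"
      unfolding EE_def by blast
    then obtain a where a: "a < L k s" "x = tri (rc k s a) (rc k s (a+1))"
      using ring_sub[OF assms, of s] by auto
    define m where "m = psum k (s-1) + a"
    have "psum k s = psum k (s-1) + L k s" using psum_L s by auto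
    moreover have "psum k s \<le> T1 k" using psum_le_T s by auto
    ultimately have mT: "m < T1 k" using a unfolding m_def by linarith
    have "pc k m = rc k s a" unfolding m_def using PC[OF assms, of s a] s a by auto
    moreover have "pc k (m+1) = rc k s (a+1)" unfolding m_def using PC[OF assms, of s "a+1"] s a by auto
    ultimately have "x = tri (pc k m) (pc k (m+1))" using a by simp
    then show "x \<in> {tri (pc k m) (pc k (m+1)) | m. m < T1 k}" using mT by blast
  qed
next
  show "{tri (pc k m) (pc k (m+1)) | m. m < T1 k} \<subseteq> EE k"
  proof
    fix x assume "x \<in> {tri (pc k m) (pc k (m+1)) | m. m < T1 k}"
    then obtain m where m: "m < T1 k" "x = tri (pc k m) (pc k (m+1))" by auto
    obtain s b where sb: "1 \<le> s" "s \<le> k-1" "b \<le> L k s" "1 \<le> b \<or> s = 1" "m+1 = psum k (s-1) + b"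
      using rep[OF assms, of "m+1"] m by auto
    have b1: "1 \<le> b" using sb by (auto simp: psum_0)
    have "m = psum k (s-1) + (b-1)" using sb b1 by simp
    then have "pc k m = rc k s (b-1)" using PC[OF assms sb(1,2), of "b-1"] sb by simp
    moreover have "pc k (m+1) = rc k s (b-1+1)" using PC[OF assms sb(1,2,3)] sb b1 by simp
    moreover have "tri (rc k s (b-1)) (rc k s (b-1+1)) \<in> E1 k s \<union> E2 k s \<union> E3 k s \<union> E4 k s"
      using ring_sup[OF assms sb(1,2), of "b-1"] sb b1 unfolding L_def by simp
    ultimately show "x \<in> EE k" using m sb unfolding EE_def by auto
  qed
qed

lemma eseq_pc:
  assumes "2 \<le> k" "m \<le> T1 k"
  shows "eseq k m = cv (pc k m)"
proof (cases "m = 0")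
  case True then show ?thesis by (simp add: eseq_def pc_def cv_def)
next
  case False
  then obtain s where s: "1 \<le> s" "s \<le> k-1" "psum k (s-1) < m" "m \<le> psum k s"
    using sidx_ex[of m k "k-1"] assms by (auto simp: T1_psum)
  have si: "sidx k m = s" by (rule sidx_eq[OF s])
  define a where "a = m - psum k (s-1)"
  have a1: "1 \<le> a" using s unfolding a_def by simp
  have e: "eseq k m = (if a \<in> {1..4*(k-s)} then {v 1 (2*s-1), v 2 (2*s-1+a), v 3 1}
      else if a \<in> {4*(k-s)+1..8*(k-s)} then {v 1 ((6*s+a) - (4*k+1)), v 2 (4*k-2*s-1), v 3 1}
      else if a \<in> {8*(k-s)+1..12*(k-s)-2} then {v 1 (4*k-2*s-1), v 2 (12*k - (10*s+1+a)), v 3 1}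
      else {v 1 (16*k - (14*s+3+a)), v 2 (2*s+1), v 3 1})"
    unfolding eseq_def si a_def Let_def using False by simp
  have p: "pc k m = rc k s a" unfolding pc_def si a_def using False by simp
  show ?thesis unfolding e p rc_def cv_def using a1 by auto
qed

definition P :: "nat \<Rightarrow> (nat \<times> nat) set" where "P k = pc k ` {0..T1 k}"
definition GG :: "nat \<Rightarrow> (nat \<times> nat) set \<Rightarrow> vert set set" where
  "GG k C = EE k \<union> FF k \<union> cv ` C"

lemma P_bounds:
  assumes "2 \<le> k" "c \<in> P k"
  shows "1 \<le> fst c \<and> fst c \<le> 4*k-3 \<and> 1 \<le> snd c \<and> snd c \<le> 4*k-3"
  using assms Q1 unfolding P_def by auto

lemma nosq:
  assumes "2 \<le> k" "(a,b) \<in> P k" "(a',b) \<in> P k" "(a,b') \<in> P k" "(a',b') \<in> P k"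
    "a' = a+1 \<or> a = a'+1" "b' = b+1 \<or> b = b'+1"
  shows False
proof -
  obtain i1 where i1: "i1 \<le> T1 k" "pc k i1 = (a,b)" using assms(2) unfolding P_def by auto
  obtain i2 where i2: "i2 \<le> T1 k" "pc k i2 = (a',b)" using assms(3) unfolding P_def by auto
  obtain i3 where i3: "i3 \<le> T1 k" "pc k i3 = (a,b')" using assms(4) unfolding P_def by auto
  obtain i4 where i4: "i4 \<le> T1 k" "pc k i4 = (a',b')" using assms(5) unfolding P_def by auto
  have d: "i1 \<noteq> i4" "i2 \<noteq> i3" using i1 i2 i3 i4 assms(6,7) by auto
  have "i2 = i1+1 \<or> i1 = i2+1" by (rule Q3[OF assms(1) i1(1) i2(1)]) (use i1 i2 assms(6) in \<open>auto simp: adj_def\<close>)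
  moreover have "i3 = i1+1 \<or> i1 = i3+1" by (rule Q3[OF assms(1) i1(1) i3(1)]) (use i1 i3 assms(7) in \<open>auto simp: adj_def\<close>)
  moreover have "i4 = i2+1 \<or> i2 = i4+1" by (rule Q3[OF assms(1) i2(1) i4(1)]) (use i2 i4 assms(7) in \<open>auto simp: adj_def\<close>)
  moreover have "i4 = i3+1 \<or> i3 = i4+1" by (rule Q3[OF assms(1) i3(1) i4(1)]) (use i3 i4 assms(6) in \<open>auto simp: adj_def\<close>)
  ultimately show False using d by linarith
qed

lemma tri_sym: "tri c d = tri d c" unfolding tri_def by auto

lemma EE_char:
  assumes "2 \<le> k"
  shows "x \<in> EE k \<longleftrightarrow> (\<exists>c d. c \<in> P k \<and> d \<in> P k \<and> adj c d \<and> x = tri c d)"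
proof
  assume "x \<in> EE k"
  then obtain m where "m < T1 k" "x = tri (pc k m) (pc k (m+1))" using Q5[OF assms] by auto
  then show "\<exists>c d. c \<in> P k \<and> d \<in> P k \<and> adj c d \<and> x = tri c d"
    using Q2[OF assms] unfolding P_def by (intro exI[of _ "pc k m"] exI[of _ "pc k (m+1)"]) auto
next
  assume "\<exists>c d. c \<in> P k \<and> d \<in> P k \<and> adj c d \<and> x = tri c d"
  then obtain i j where ij: "i \<le> T1 k" "j \<le> T1 k" "adj (pc k i) (pc k j)" "x = tri (pc k i) (pc k j)"
    unfolding P_def by auto
  then have "j = i+1 \<or> i = j+1" using Q3[OF assms] by blast
  then show "x \<in> EE k"
  proof
    assume "j = i+1" then show ?thesis using ij Q5[OF assms] by auto
  next
    assume "i = j+1" then show ?thesis using ij Q5[OF assms] tri_sym by auto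
  qed
qed

lemma v_pair: "v l j = (l, j)" by (simp add: v_def)

lemma tri_pairs: "tri c d = {(1, fst c), (1, fst d), (2, snd c), (2, snd d)}"
  unfolding tri_def v_def by simp

lemma cv_pairs: "cv c = {(1, fst c), (2, snd c), (3, 1)}"
  unfolding cv_def v_def by simp

lemma FF_pairs: "FF k = {{(l,j), (l,j+1), (3,1)} | j l. j \<in> {1..4*k-4} \<and> l \<in> {1,2}}"
  unfolding FF_def v_def by simp

lemma no3_EE: "2 \<le> k \<Longrightarrow> x \<in> EE k \<Longrightarrow> (3,j) \<notin> x"
  unfolding EE_char tri_pairs by auto

definition lev :: "nat \<Rightarrow> vert set \<Rightarrow> nat set" where "lev l X = {j. (l,j) \<in> X}"

lemma lev_insert[simp]: "lev l (insert (l',j) X) = (if l = l' then insert j (lev l X) else lev l X)"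
  unfolding lev_def by auto
lemma lev_empty[simp]: "lev l {} = {}" unfolding lev_def by auto

lemma lev_eq: "X = Y \<Longrightarrow> lev 1 X = lev 1 Y \<and> lev 2 X = lev 2 Y \<and> lev 3 X = lev 3 Y"
  by simp

lemma B3:
  assumes "2 \<le> k"
  shows "{(3,1),(1,a),(2,b)} \<in> GG k C \<longleftrightarrow> (a,b) \<in> C"
proof
  assume h: "{(3,1),(1,a),(2,b)} \<in> GG k C"
  have "{(3,1),(1,a),(2,b)} \<notin> EE k" using no3_EE[OF assms, of _ 1] by blast
  moreover have "{(3,1),(1,a),(2,b)} \<notin> FF k"
  proof
    assume "{(3,1),(1,a),(2,b)} \<in> FF k"
    then obtain l j where "{(3::nat,1::nat),(1,a),(2,b)} = {(l,j),(l,j+1),(3,1)}" "l \<in> {1,2}"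
      unfolding FF_pairs by blast
    then show False by (auto dest!: lev_eq split: if_splits)
  qed
  ultimately have "{(3,1),(1,a),(2,b)} \<in> cv ` C" using h unfolding GG_def by blast
  then obtain c where "c \<in> C" "{(3::nat,1::nat),(1,a),(2,b)} = {(1, fst c), (2, snd c), (3, 1)}"
    unfolding cv_pairs by auto
  then show "(a,b) \<in> C" by (cases c) (auto dest!: lev_eq)
next
  assume "(a,b) \<in> C"
  moreover have "cv (a,b) = {(3,1),(1,a),(2,b)}" unfolding cv_pairs by auto
  ultimately show "{(3,1),(1,a),(2,b)} \<in> GG k C" unfolding GG_def by (metis UnI2 imageI)
qed

lemma B1:
  assumes "2 \<le> k" "l \<in> {1,2}"
  shows "{(3,1),(l,a),(l,b)} \<in> GG k C \<longleftrightarrow> ((b = a+1 \<and> 1 \<le> a \<and> a \<le> 4*k-4) \<or> (a = b+1 \<and> 1 \<le> b \<and> b \<le> 4*k-4))"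
proof
  assume h: "{(3,1),(l,a),(l,b)} \<in> GG k C"
  have "{(3,1),(l,a),(l,b)} \<notin> EE k" using no3_EE[OF assms(1), of _ 1] by blast
  moreover have "{(3,1),(l,a),(l,b)} \<notin> cv ` C"
  proof
    assume "{(3,1),(l,a),(l,b)} \<in> cv ` C"
    then obtain c where "{(3::nat,1::nat),(l,a),(l,b)} = {(1, fst c), (2, snd c), (3, 1)}"
      unfolding cv_pairs by auto
    then show False using assms(2) by (auto dest!: lev_eq split: if_splits)
  qed
  ultimately have "{(3,1),(l,a),(l,b)} \<in> FF k" using h unfolding GG_def by blast
  then obtain l' j where "{(3::nat,1::nat),(l,a),(l,b)} = {(l',j),(l',j+1),(3,1)}" "l' \<in> {1,2}" "j \<in> {1..4*k-4}"
    unfolding FF_pairs by blast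
  then show "((b = a+1 \<and> 1 \<le> a \<and> a \<le> 4*k-4) \<or> (a = b+1 \<and> 1 \<le> b \<and> b \<le> 4*k-4))"
    using assms(2) by (auto dest!: lev_eq split: if_splits simp: doubleton_eq_iff)
next
  assume h: "(b = a+1 \<and> 1 \<le> a \<and> a \<le> 4*k-4) \<or> (a = b+1 \<and> 1 \<le> b \<and> b \<le> 4*k-4)"
  then show "{(3,1),(l,a),(l,b)} \<in> GG k C"
  proof
    assume "b = a+1 \<and> 1 \<le> a \<and> a \<le> 4*k-4"
    then have "{(3,1),(l,a),(l,b)} \<in> FF k" unfolding FF_pairs using assms(2)
      by (intro CollectI exI[of _ a] exI[of _ l]) auto
    then show ?thesis unfolding GG_def by blast
  next
    assume "a = b+1 \<and> 1 \<le> b \<and> b \<le> 4*k-4"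
    then have "{(3,1),(l,a),(l,b)} \<in> FF k" unfolding FF_pairs using assms(2)
      by (intro CollectI exI[of _ b] exI[of _ l]) auto
    then show ?thesis unfolding GG_def by blast
  qed
qed


lemma not_FF: "(3,1) \<notin> X \<Longrightarrow> X \<notin> FF k"
  unfolding FF_pairs by auto
lemma not_cv: "(3,1) \<notin> X \<Longrightarrow> X \<notin> cv ` C"
  unfolding cv_pairs by auto

lemma B4:
  assumes "2 \<le> k"
  shows "{(1,a),(1,a'),(2,b)} \<in> GG k C \<longleftrightarrow> (a,b) \<in> P k \<and> (a',b) \<in> P k \<and> (a' = a+1 \<or> a = a'+1)"
proof
  assume h: "{(1,a),(1,a'),(2,b)} \<in> GG k C"
  have "{(1,a),(1,a'),(2,b)} \<in> EE k" using h not_FF[of "{(1,a),(1,a'),(2,b)}" k] not_cv[of "{(1,a),(1,a'),(2,b)}" C] unfolding GG_def by auto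
  then obtain c d where cd: "c \<in> P k" "d \<in> P k" "adj c d" "{(1::nat,a),(1,a'),(2::nat,b)} = tri c d"
    using EE_char[OF assms] by blast
  then have l: "{a,a'} = {fst c, fst d}" "{b} = {snd c, snd d}"
    unfolding tri_pairs by (auto dest!: lev_eq)
  then have "snd c = b" "snd d = b" by auto
  then have "fst d = fst c + 1 \<or> fst c = fst d + 1" using cd(3) unfolding adj_def by auto
  then have "(a = fst c \<and> a' = fst d) \<or> (a = fst d \<and> a' = fst c)" using l(1) by (auto simp: doubleton_eq_iff)
  then show "(a,b) \<in> P k \<and> (a',b) \<in> P k \<and> (a' = a+1 \<or> a = a'+1)"
    using cd(1,2) \<open>snd c = b\<close> \<open>snd d = b\<close> \<open>fst d = fst c + 1 \<or> fst c = fst d + 1\<close>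
    by (cases c; cases d) auto
next
  assume h: "(a,b) \<in> P k \<and> (a',b) \<in> P k \<and> (a' = a+1 \<or> a = a'+1)"
  have "tri (a,b) (a',b) = {(1,a),(1,a'),(2,b)}" unfolding tri_pairs by auto
  moreover have "adj (a,b) (a',b)" using h unfolding adj_def by auto
  ultimately have "{(1,a),(1,a'),(2,b)} \<in> EE k" using EE_char[OF assms] h by metis
  then show "{(1,a),(1,a'),(2,b)} \<in> GG k C" unfolding GG_def by blast
qed

lemma B5:
  assumes "2 \<le> k"
  shows "{(1,a),(2,b),(2,b')} \<in> GG k C \<longleftrightarrow> (a,b) \<in> P k \<and> (a,b') \<in> P k \<and> (b' = b+1 \<or> b = b'+1)"
proof
  assume h: "{(1,a),(2,b),(2,b')} \<in> GG k C"
  have "{(1,a),(2,b),(2,b')} \<in> EE k" using h not_FF[of "{(1,a),(2,b),(2,b')}" k] not_cv[of "{(1,a),(2,b),(2,b')}" C] unfolding GG_def by auto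
  then obtain c d where cd: "c \<in> P k" "d \<in> P k" "adj c d" "{(1::nat,a),(2::nat,b),(2,b')} = tri c d"
    using EE_char[OF assms] by blast
  then have l: "{a} = {fst c, fst d}" "{b,b'} = {snd c, snd d}"
    unfolding tri_pairs by (auto dest!: lev_eq)
  then have "fst c = a" "fst d = a" by auto
  then have "snd d = snd c + 1 \<or> snd c = snd d + 1" using cd(3) unfolding adj_def by auto
  then have "(b = snd c \<and> b' = snd d) \<or> (b = snd d \<and> b' = snd c)" using l(2) by (auto simp: doubleton_eq_iff)
  then show "(a,b) \<in> P k \<and> (a,b') \<in> P k \<and> (b' = b+1 \<or> b = b'+1)"
    using cd(1,2) \<open>fst c = a\<close> \<open>fst d = a\<close> \<open>snd d = snd c + 1 \<or> snd c = snd d + 1\<close>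
    by (cases c; cases d) auto
next
  assume h: "(a,b) \<in> P k \<and> (a,b') \<in> P k \<and> (b' = b+1 \<or> b = b'+1)"
  have "tri (a,b) (a,b') = {(1,a),(2,b),(2,b')}" unfolding tri_pairs by auto
  moreover have "adj (a,b) (a,b')" using h unfolding adj_def by auto
  ultimately have "{(1,a),(2,b),(2,b')} \<in> EE k" using EE_char[OF assms] h by metis
  then show "{(1,a),(2,b),(2,b')} \<in> GG k C" unfolding GG_def by blast
qed

lemma B6:
  assumes "2 \<le> k" "l \<in> {1,2}"
  shows "{(l,a),(l,b),(l,c)} \<notin> GG k C"
proof
  assume h: "{(l,a),(l,b),(l,c)} \<in> GG k C"
  have "(3,1) \<notin> {(l,a),(l,b),(l,c)}" using assms by auto
  then have "{(l,a),(l,b),(l,c)} \<in> EE k" using h not_FF[of "{(l,a),(l,b),(l,c)}" k] not_cv[of "{(l,a),(l,b),(l,c)}" C] unfolding GG_def by auto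
  then obtain p q where "{(l,a),(l,b),(l,c)} = tri p q"
    using EE_char[OF assms(1)] by blast
  then show False unfolding tri_pairs using assms(2) by (auto dest!: lev_eq split: if_splits)
qed

lemma B1a: "2 \<le> k \<Longrightarrow> {(3,1),(1,a),(1,b)} \<in> GG k C \<longleftrightarrow> ((b = a+1 \<and> 1 \<le> a \<and> a \<le> 4*k-4) \<or> (a = b+1 \<and> 1 \<le> b \<and> b \<le> 4*k-4))"
  by (rule B1) auto
lemma B1b: "2 \<le> k \<Longrightarrow> {(3,1),(2,a),(2,b)} \<in> GG k C \<longleftrightarrow> ((b = a+1 \<and> 1 \<le> a \<and> a \<le> 4*k-4) \<or> (a = b+1 \<and> 1 \<le> b \<and> b \<le> 4*k-4))"
  by (rule B1) auto
lemma B6a: "2 \<le> k \<Longrightarrow> {(1,a),(1,b),(1,c)} \<notin> GG k C"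
  by (rule B6) auto
lemma B6b: "2 \<le> k \<Longrightarrow> {(2,a),(2,b),(2,c)} \<notin> GG k C"
  by (rule B6) auto

lemma CN: "({(3,1),(1,p),(2,q)} \<in> cv ` X) = ((p,q) \<in> X)"
proof
  assume "{(3,1),(1,p),(2,q)} \<in> cv ` X"
  then obtain c where "c \<in> X" "{(3::nat,1::nat),(1,p),(2,q)} = {(1, fst c), (2, snd c), (3, 1)}"
    unfolding cv_pairs by auto
  then show "(p,q) \<in> X" by (cases c) (auto dest!: lev_eq)
next
  assume "(p,q) \<in> X"
  moreover have "cv (p,q) = {(3,1),(1,p),(2,q)}" unfolding cv_pairs by auto
  ultimately show "{(3,1),(1,p),(2,q)} \<in> cv ` X" by (metis imageI)
qed

lemma M_111:
  assumes "2 \<le> k"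
  shows "({(1,p),(1,q),(1,r)} \<in> GG k C) = False"
  using B6a[OF assms] by simp

lemma M_112:
  assumes "2 \<le> k"
  shows "({(1,p),(1,q),(2,r)} \<in> GG k C) = ((p,r) \<in> P k \<and> (q,r) \<in> P k \<and> (q = p+1 \<or> p = q+1))"
  by (rule B4[OF assms])

lemma M_113:
  assumes "2 \<le> k"
  shows "({(1,p),(1,q),(3,1)} \<in> GG k C) = ((q = p+1 \<and> 1 \<le> p \<and> p \<le> 4*k-4) \<or> (p = q+1 \<and> 1 \<le> q \<and> q \<le> 4*k-4))"
proof -
  have e: "{(1,p),(1,q),(3,1)} = {(3,1),(1,p),(1,q)}" by blast
  show ?thesis unfolding e by (rule B1a[OF assms])
qed

lemma M_121:
  assumes "2 \<le> k"
  shows "({(1,p),(2,q),(1,r)} \<in> GG k C) = ((p,q) \<in> P k \<and> (r,q) \<in> P k \<and> (r = p+1 \<or> p = r+1))"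
proof -
  have e: "{(1,p),(2,q),(1,r)} = {(1,p),(1,r),(2,q)}" by blast
  show ?thesis unfolding e by (rule B4[OF assms])
qed

lemma M_122:
  assumes "2 \<le> k"
  shows "({(1,p),(2,q),(2,r)} \<in> GG k C) = ((p,q) \<in> P k \<and> (p,r) \<in> P k \<and> (r = q+1 \<or> q = r+1))"
  by (rule B5[OF assms])

lemma M_123:
  assumes "2 \<le> k"
  shows "({(1,p),(2,q),(3,1)} \<in> GG k C) = ((p,q) \<in> C)"
proof -
  have e: "{(1,p),(2,q),(3,1)} = {(3,1),(1,p),(2,q)}" by blast
  show ?thesis unfolding e by (rule B3[OF assms])
qed

lemma M_131:
  assumes "2 \<le> k"
  shows "({(1,p),(3,1),(1,r)} \<in> GG k C) = ((r = p+1 \<and> 1 \<le> p \<and> p \<le> 4*k-4) \<or> (p = r+1 \<and> 1 \<le> r \<and> r \<le> 4*k-4))"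
proof -
  have e: "{(1,p),(3,1),(1,r)} = {(3,1),(1,p),(1,r)}" by blast
  show ?thesis unfolding e by (rule B1a[OF assms])
qed

lemma M_132:
  assumes "2 \<le> k"
  shows "({(1,p),(3,1),(2,r)} \<in> GG k C) = ((p,r) \<in> C)"
proof -
  have e: "{(1,p),(3,1),(2,r)} = {(3,1),(1,p),(2,r)}" by blast
  show ?thesis unfolding e by (rule B3[OF assms])
qed

lemma M_211:
  assumes "2 \<le> k"
  shows "({(2,p),(1,q),(1,r)} \<in> GG k C) = ((q,p) \<in> P k \<and> (r,p) \<in> P k \<and> (r = q+1 \<or> q = r+1))"
proof -
  have e: "{(2,p),(1,q),(1,r)} = {(1,q),(1,r),(2,p)}" by blast
  show ?thesis unfolding e by (rule B4[OF assms])
qed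

lemma M_212:
  assumes "2 \<le> k"
  shows "({(2,p),(1,q),(2,r)} \<in> GG k C) = ((q,p) \<in> P k \<and> (q,r) \<in> P k \<and> (r = p+1 \<or> p = r+1))"
proof -
  have e: "{(2,p),(1,q),(2,r)} = {(1,q),(2,p),(2,r)}" by blast
  show ?thesis unfolding e by (rule B5[OF assms])
qed

lemma M_213:
  assumes "2 \<le> k"
  shows "({(2,p),(1,q),(3,1)} \<in> GG k C) = ((q,p) \<in> C)"
proof -
  have e: "{(2,p),(1,q),(3,1)} = {(3,1),(1,q),(2,p)}" by blast
  show ?thesis unfolding e by (rule B3[OF assms])
qed

lemma M_221:
  assumes "2 \<le> k"
  shows "({(2,p),(2,q),(1,r)} \<in> GG k C) = ((r,p) \<in> P k \<and> (r,q) \<in> P k \<and> (q = p+1 \<or> p = q+1))"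
proof -
  have e: "{(2,p),(2,q),(1,r)} = {(1,r),(2,p),(2,q)}" by blast
  show ?thesis unfolding e by (rule B5[OF assms])
qed

lemma M_222:
  assumes "2 \<le> k"
  shows "({(2,p),(2,q),(2,r)} \<in> GG k C) = False"
  using B6b[OF assms] by simp

lemma M_223:
  assumes "2 \<le> k"
  shows "({(2,p),(2,q),(3,1)} \<in> GG k C) = ((q = p+1 \<and> 1 \<le> p \<and> p \<le> 4*k-4) \<or> (p = q+1 \<and> 1 \<le> q \<and> q \<le> 4*k-4))"
proof -
  have e: "{(2,p),(2,q),(3,1)} = {(3,1),(2,p),(2,q)}" by blast
  show ?thesis unfolding e by (rule B1b[OF assms])
qed

lemma M_231:
  assumes "2 \<le> k"
  shows "({(2,p),(3,1),(1,r)} \<in> GG k C) = ((r,p) \<in> C)"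
proof -
  have e: "{(2,p),(3,1),(1,r)} = {(3,1),(1,r),(2,p)}" by blast
  show ?thesis unfolding e by (rule B3[OF assms])
qed

lemma M_232:
  assumes "2 \<le> k"
  shows "({(2,p),(3,1),(2,r)} \<in> GG k C) = ((r = p+1 \<and> 1 \<le> p \<and> p \<le> 4*k-4) \<or> (p = r+1 \<and> 1 \<le> r \<and> r \<le> 4*k-4))"
proof -
  have e: "{(2,p),(3,1),(2,r)} = {(3,1),(2,p),(2,r)}" by blast
  show ?thesis unfolding e by (rule B1b[OF assms])
qed

lemma M_311:
  assumes "2 \<le> k"
  shows "({(3,1),(1,q),(1,r)} \<in> GG k C) = ((r = q+1 \<and> 1 \<le> q \<and> q \<le> 4*k-4) \<or> (q = r+1 \<and> 1 \<le> r \<and> r \<le> 4*k-4))"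
  by (rule B1a[OF assms])

lemma M_312:
  assumes "2 \<le> k"
  shows "({(3,1),(1,q),(2,r)} \<in> GG k C) = ((q,r) \<in> C)"
  by (rule B3[OF assms])

lemma M_321:
  assumes "2 \<le> k"
  shows "({(3,1),(2,q),(1,r)} \<in> GG k C) = ((r,q) \<in> C)"
proof -
  have e: "{(3,1),(2,q),(1,r)} = {(3,1),(1,r),(2,q)}" by blast
  show ?thesis unfolding e by (rule B3[OF assms])
qed

lemma M_322:
  assumes "2 \<le> k"
  shows "({(3,1),(2,q),(2,r)} \<in> GG k C) = ((r = q+1 \<and> 1 \<le> q \<and> q \<le> 4*k-4) \<or> (q = r+1 \<and> 1 \<le> r \<and> r \<le> 4*k-4))"
  by (rule B1b[OF assms])

lemmas CN_312 = CN

lemma CN_321: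
  "({(3,1),(2,q),(1,p)} \<in> cv ` X) = ((p,q) \<in> X)"
proof -
  have e: "{(3,1),(2,q),(1,p)} = {(3,1),(1,p),(2,q)}" by blast
  show ?thesis unfolding e by (rule CN)
qed

lemma CN_132:
  "({(1,p),(3,1),(2,q)} \<in> cv ` X) = ((p,q) \<in> X)"
proof -
  have e: "{(1,p),(3,1),(2,q)} = {(3,1),(1,p),(2,q)}" by blast
  show ?thesis unfolding e by (rule CN)
qed

lemma CN_123:
  "({(1,p),(2,q),(3,1)} \<in> cv ` X) = ((p,q) \<in> X)"
proof -
  have e: "{(1,p),(2,q),(3,1)} = {(3,1),(1,p),(2,q)}" by blast
  show ?thesis unfolding e by (rule CN)
qed

lemma CN_231:
  "({(2,q),(3,1),(1,p)} \<in> cv ` X) = ((p,q) \<in> X)"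
proof -
  have e: "{(2,q),(3,1),(1,p)} = {(3,1),(1,p),(2,q)}" by blast
  show ?thesis unfolding e by (rule CN)
qed

lemma CN_213:
  "({(2,q),(1,p),(3,1)} \<in> cv ` X) = ((p,q) \<in> X)"
proof -
  have e: "{(2,q),(1,p),(3,1)} = {(3,1),(1,p),(2,q)}" by blast
  show ?thesis unfolding e by (rule CN)
qed

lemmas Mrules = M_111 M_112 M_113 M_121 M_122 M_123 M_131 M_132 M_211 M_212 M_213 M_221 M_222 M_223 M_231 M_232 M_311 M_312 M_321 M_322
lemmas CNrules = CN_312 CN_321 CN_132 CN_123 CN_231 CN_213

definition N :: "nat \<Rightarrow> (nat \<times> nat) set \<Rightarrow> (nat \<times> nat) set" where
  "N k C = {c \<in> P k. c \<notin> C \<and> (\<exists>d\<in>C. adj c d)}"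

lemma VH_cases:
  "u \<in> VH k \<Longrightarrow> (\<exists>j. u = (1,j) \<and> 1 \<le> j \<and> j \<le> 4*k-3) \<or> (\<exists>j. u = (2,j) \<and> 1 \<le> j \<and> j \<le> 4*k-3) \<or> u = (3,1)"
  unfolding VH_def A1_def A2_def v_def by auto

lemma card3: "x \<noteq> y \<Longrightarrow> y \<noteq> z \<Longrightarrow> x \<noteq> z \<Longrightarrow> card {x,y,z} = 3"
  by simp

lemma faces:
  assumes "w \<noteq> x" "w \<noteq> y" "w \<noteq> z" "x \<noteq> y" "y \<noteq> z" "x \<noteq> z"
    "f \<subseteq> insert w {x,y,z}" "card f = 3" "f \<noteq> {x,y,z}"
  shows "f = {w,y,z} \<or> f = {w,x,z} \<or> f = {w,x,y}"
proof -
  have fin: "finite f" using assms(8) by (metis card.infinite zero_neq_numeral)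
  have sub: "\<And>A. f \<subseteq> A \<Longrightarrow> card A = 3 \<Longrightarrow> finite A \<Longrightarrow> f = A"
    using assms(8) card_subset_eq by metis
  show ?thesis
  proof (cases "w \<in> f")
    case False
    then have "f \<subseteq> {x,y,z}" using assms(7) by auto
    then have "f = {x,y,z}" using sub assms by simp
    then show ?thesis using assms(9) by simp
  next
    case True
    show ?thesis
    proof (cases "x \<in> f")
      case False
      then have "f \<subseteq> {w,y,z}" using assms(7) by auto
      then show ?thesis using sub assms by simp
    next
      case True
      show ?thesis
      proof (cases "y \<in> f")
        case False
        then have "f \<subseteq> {w,x,z}" using assms(7) by auto
        then show ?thesis using sub assms by simp
      next
        case True
        show ?thesis
        proof (cases "z \<in> f")
          case False
          then have "f \<subseteq> {w,x,y}" using assms(7) by auto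
          then show ?thesis using sub assms by simp
        next
          case True
          then have "{w,x,y,z} \<subseteq> f" using \<open>w \<in> f\<close> \<open>x \<in> f\<close> \<open>y \<in> f\<close> by auto
          then have "card {w,x,y,z} \<le> card f" using fin by (rule card_mono[rotated])
          then show ?thesis using assms by simp
        qed
      qed
    qed
  qed
qed

lemma adjC1: "(a,b) \<in> C \<Longrightarrow> b' = Suc b \<or> b = Suc b' \<Longrightarrow> \<exists>x\<in>C. adj (a,b') x"
  by (rule bexI[of _ "(a,b)"]) (auto simp: adj_def)
lemma adjC2: "(a,b) \<in> C \<Longrightarrow> a' = Suc a \<or> a = Suc a' \<Longrightarrow> \<exists>x\<in>C. adj (a',b) x"
  by (rule bexI[of _ "(a,b)"]) (auto simp: adj_def)

lemma infect_sub:
  assumes k2: "2 \<le> k" and CP: "C \<subseteq> P k"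
    and e: "e \<in> boot_step (VH k) (GG k C)" "e \<notin> GG k C"
  shows "e \<in> cv ` N k C"
proof -
  from e obtain w where eV: "e \<subseteq> VH k" and c3: "card e = 3" and wV: "w \<in> VH k - e"
    and H: "\<forall>f. f \<subseteq> insert w e \<and> card f = 3 \<and> f \<noteq> e \<longrightarrow> f \<in> GG k C"
    unfolding boot_step_def by auto
  from c3 obtain x y z where xyz: "e = {x,y,z}" "x \<noteq> y" "y \<noteq> z" "x \<noteq> z" unfolding card_3_iff by blast
  have wd: "w \<noteq> x" "w \<noteq> y" "w \<noteq> z" using wV xyz by auto
  have f1: "{w,y,z} \<in> GG k C" using H[rule_format, of "{w,y,z}"] xyz wd by auto
  have f2: "{w,x,z} \<in> GG k C" using H[rule_format, of "{w,x,z}"] xyz wd by auto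
  have f3: "{w,x,y} \<in> GG k C" using H[rule_format, of "{w,x,y}"] xyz wd by auto
  have ne: "{x,y,z} \<notin> GG k C" using e(2) xyz by simp
  have V: "w \<in> VH k" "x \<in> VH k" "y \<in> VH k" "z \<in> VH k" using wV eV xyz by auto
  show ?thesis unfolding xyz
    using VH_cases[OF V(1)] VH_cases[OF V(2)] VH_cases[OF V(3)] VH_cases[OF V(4)]
      f1 f2 f3 ne wd xyz(2-4)
    apply (elim disjE exE conjE)
    apply (simp_all only: Mrules[OF k2] CNrules)
    apply (simp_all add: N_def)
    apply ((blast intro: adjC1 adjC2) | (elim disjE conjE; linarith)
       | (insert CP, elim disjE conjE; fastforce))+
    done
qed


lemma VH_mem1: "1 \<le> j \<Longrightarrow> j \<le> 4*k-3 \<Longrightarrow> (1,j) \<in> VH k"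
  unfolding VH_def A1_def v_def by auto
lemma VH_mem2: "1 \<le> j \<Longrightarrow> j \<le> 4*k-3 \<Longrightarrow> (2,j) \<in> VH k"
  unfolding VH_def A2_def v_def by auto
lemma VH_mem3: "(3,1) \<in> VH k"
  unfolding VH_def v_def by auto

lemma infect_sup:
  assumes k2: "2 \<le> k" and CP: "C \<subseteq> P k" and cN: "c \<in> N k C"
  shows "cv c \<in> boot_step (VH k) (GG k C)"
proof -
  obtain a b where c: "c = (a,b)" by force
  from cN obtain d where cP: "(a,b) \<in> P k" and nC: "(a,b) \<notin> C" and dC: "d \<in> C" and ad: "adj (a,b) d"
    unfolding N_def c by auto
  obtain a' b' where d: "d = (a',b')" by force
  have dP: "(a',b') \<in> P k" using dC CP d by auto
  have bc: "1 \<le> a" "a \<le> 4*k-3" "1 \<le> b" "b \<le> 4*k-3" using P_bounds[OF k2 cP] by auto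
  have bd: "1 \<le> a'" "a' \<le> 4*k-3" "1 \<le> b'" "b' \<le> 4*k-3" using P_bounds[OF k2 dP] by auto
  have cvc: "cv c = {(1,a),(2,b),(3,1)}" unfolding cv_pairs c by simp
  have sub: "cv c \<subseteq> VH k" unfolding cvc using bc VH_mem1 VH_mem2 VH_mem3 by auto
  have card: "card (cv c) = 3" unfolding cvc by simp
  have notG: "cv c \<notin> GG k C" unfolding cvc M_123[OF k2] using nC .
  have ad': "(a' = a \<and> (b' = b+1 \<or> b = b'+1)) \<or> (b' = b \<and> (a' = a+1 \<or> a = a'+1))"
    using ad unfolding d adj_def by auto
  then consider (V) "a' = a" "b' = b+1 \<or> b = b'+1" | (H) "b' = b" "a' = a+1 \<or> a = a'+1" by blast
  then have "\<exists>w\<in>VH k - cv c. \<forall>f. f \<subseteq> insert w (cv c) \<and> card f = 3 \<and> f \<noteq> cv c \<longrightarrow> f \<in> GG k C"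
  proof cases
    case V
    have wV: "(2,b') \<in> VH k - cv c" unfolding cvc using VH_mem2 bd V by auto
    have "\<forall>f. f \<subseteq> insert (2,b') (cv c) \<and> card f = 3 \<and> f \<noteq> cv c \<longrightarrow> f \<in> GG k C"
    proof (intro allI impI)
      fix f assume hf: "f \<subseteq> insert (2,b') (cv c) \<and> card f = 3 \<and> f \<noteq> cv c"
      have "f = {(2,b'),(2,b),(3,1)} \<or> f = {(2,b'),(1,a),(3,1)} \<or> f = {(2,b'),(1,a),(2,b)}"
        by (rule faces) (use hf V in \<open>auto simp: cvc\<close>)
      then show "f \<in> GG k C"
        using V bc bd dC cP dP unfolding d
        by (elim disjE; simp only: Mrules[OF k2]; auto)
    qed
    then show ?thesis using wV by blast
  next
    case H
    have wV: "(1,a') \<in> VH k - cv c" unfolding cvc using VH_mem1 bd H by auto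
    have "\<forall>f. f \<subseteq> insert (1,a') (cv c) \<and> card f = 3 \<and> f \<noteq> cv c \<longrightarrow> f \<in> GG k C"
    proof (intro allI impI)
      fix f assume hf: "f \<subseteq> insert (1,a') (cv c) \<and> card f = 3 \<and> f \<noteq> cv c"
      have "f = {(1,a'),(2,b),(3,1)} \<or> f = {(1,a'),(1,a),(3,1)} \<or> f = {(1,a'),(1,a),(2,b)}"
        by (rule faces) (use hf H in \<open>auto simp: cvc\<close>)
      then show "f \<in> GG k C"
        using H bc bd dC cP dP unfolding d
        by (elim disjE; simp only: Mrules[OF k2]; auto)
    qed
    then show ?thesis using wV by blast
  qed
  then show ?thesis unfolding boot_step_def using sub card notG by blast
qed

lemma boot_step_GG:
  assumes k2: "2 \<le> k" and CP: "C \<subseteq> P k"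
  shows "boot_step (VH k) (GG k C) = GG k C \<union> cv ` N k C"
proof
  show "boot_step (VH k) (GG k C) \<subseteq> GG k C \<union> cv ` N k C"
    using infect_sub[OF k2 CP] unfolding boot_step_def by blast
  show "GG k C \<union> cv ` N k C \<subseteq> boot_step (VH k) (GG k C)"
    using infect_sup[OF k2 CP] unfolding boot_step_def by blast
qed

abbreviation Gi :: "nat \<Rightarrow> nat set \<Rightarrow> vert set set" where "Gi k I \<equiv> GG k (pc k ` I)"

definition nb :: "nat \<Rightarrow> nat set \<Rightarrow> nat set" where
  "nb k I = {m. m \<le> T1 k \<and> m \<notin> I \<and> (\<exists>m'\<in>I. m' = m+1 \<or> m = m'+1)}"

lemma P_pc: "m \<le> T1 k \<Longrightarrow> pc k m \<in> P k" unfolding P_def by auto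

lemma N_pc:
  assumes k2: "2 \<le> k" and I: "I \<subseteq> {0..T1 k}"
  shows "N k (pc k ` I) = pc k ` nb k I"
proof
  show "N k (pc k ` I) \<subseteq> pc k ` nb k I"
  proof
    fix c assume "c \<in> N k (pc k ` I)"
    then obtain m m' where m: "m \<le> T1 k" "c = pc k m" "pc k m \<notin> pc k ` I" "m' \<in> I" "adj (pc k m) (pc k m')"
      unfolding N_def P_def by auto
    have "m' \<le> T1 k" using I m(4) by auto
    then have "m' = m+1 \<or> m = m'+1" using Q3[OF k2 m(1) _ m(5)] by blast
    moreover have "m \<notin> I" using m(3) by auto
    ultimately show "c \<in> pc k ` nb k I" using m unfolding nb_def by auto
  qed
next
  show "pc k ` nb k I \<subseteq> N k (pc k ` I)"
  proof
    fix c assume "c \<in> pc k ` nb k I"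
    then obtain m m' where m: "c = pc k m" "m \<le> T1 k" "m \<notin> I" "m' \<in> I" "m' = m+1 \<or> m = m'+1"
      unfolding nb_def by auto
    have m'T: "m' \<le> T1 k" using I m(4) by auto
    have "pc k m \<notin> pc k ` I"
    proof
      assume "pc k m \<in> pc k ` I"
      then obtain i where "i \<in> I" "pc k m = pc k i" by auto
      then have "m = i" using Q4[OF k2 m(2)] I by auto
      then show False using m(3) \<open>i \<in> I\<close> by simp
    qed
    moreover have "adj (pc k m) (pc k m')"
      using m(5)
    proof
      assume "m' = m+1" then show ?thesis using Q2[OF k2, of m] m'T by simp
    next
      assume "m = m'+1" then have "adj (pc k m') (pc k m)" using Q2[OF k2, of m'] m(2) by simp
      then show ?thesis unfolding adj_def by auto
    qed
    ultimately show "c \<in> N k (pc k ` I)" unfolding N_def using m m'T P_pc by auto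
  qed
qed

lemma step_Gi:
  assumes k2: "2 \<le> k" and I: "I \<subseteq> {0..T1 k}"
  shows "boot_step (VH k) (Gi k I) = Gi k (I \<union> nb k I)"
proof -
  have "pc k ` I \<subseteq> P k" using I unfolding P_def by auto
  then have "boot_step (VH k) (Gi k I) = Gi k I \<union> cv ` pc k ` nb k I"
    using boot_step_GG[OF k2] N_pc[OF k2 I] by simp
  then show ?thesis unfolding GG_def by (simp add: image_Un Un_assoc)
qed

lemma nb_up1: "i < T1 k \<Longrightarrow> {0..i} \<union> nb k {0..i} = {0..Suc i}"
  unfolding nb_def by (auto intro: bexI[of _ i])

lemma nb_up2: "{0..T1 k} \<union> nb k {0..T1 k} = {0..T1 k}"
  unfolding nb_def by auto

lemma nb_down: "i < T1 k \<Longrightarrow> {T1 k - i..T1 k} \<union> nb k {T1 k - i..T1 k} = {T1 k - Suc i..T1 k}"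
  unfolding nb_def by (auto intro: bexI[of _ "T1 k - i"])

lemma boot_up:
  assumes k2: "2 \<le> k"
  shows "i \<le> T1 k \<Longrightarrow> boot (VH k) (Gi k {0}) i = Gi k {0..i}"
proof (induction i)
  case 0 then show ?case by (simp add: boot_def)
next
  case (Suc i)
  have "boot (VH k) (Gi k {0}) (Suc i) = boot_step (VH k) (boot (VH k) (Gi k {0}) i)"
    by (simp add: boot_def)
  also have "\<dots> = boot_step (VH k) (Gi k {0..i})" using Suc by simp
  also have "\<dots> = Gi k ({0..i} \<union> nb k {0..i})" by (rule step_Gi[OF k2]) (use Suc in auto)
  also have "\<dots> = Gi k {0..Suc i}" using nb_up1[of i k] Suc by simp
  finally show ?case .
qed

lemma boot_down:
  assumes k2: "2 \<le> k"
  shows "i \<le> T1 k \<Longrightarrow> boot (VH k) (Gi k {T1 k}) i = Gi k {T1 k - i..T1 k}"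
proof (induction i)
  case 0 then show ?case by (simp add: boot_def)
next
  case (Suc i)
  have "boot (VH k) (Gi k {T1 k}) (Suc i) = boot_step (VH k) (boot (VH k) (Gi k {T1 k}) i)"
    by (simp add: boot_def)
  also have "\<dots> = boot_step (VH k) (Gi k {T1 k - i..T1 k})" using Suc by simp
  also have "\<dots> = Gi k ({T1 k - i..T1 k} \<union> nb k {T1 k - i..T1 k})" by (rule step_Gi[OF k2]) auto
  also have "\<dots> = Gi k {T1 k - Suc i..T1 k}" using nb_down[of i k] Suc by simp
  finally show ?case .
qed

lemma cv_notEF: "2 \<le> k \<Longrightarrow> cv c \<notin> EE k \<union> FF k"
proof
  assume k2: "2 \<le> k" and h: "cv c \<in> EE k \<union> FF k"
  have "cv c \<in> GG k {}" using h unfolding GG_def by simp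
  then show False unfolding cv_pairs M_123[OF k2] by simp
qed

lemma cv_inj: "cv c = cv d \<Longrightarrow> c = d"
  unfolding cv_pairs by (cases c; cases d) (auto dest!: lev_eq)

lemma Gi_diff:
  assumes k2: "2 \<le> k" and "B \<subseteq> A" "A \<subseteq> {0..T1 k}"
  shows "Gi k A - Gi k B = (\<lambda>m. cv (pc k m)) ` (A - B)"
proof
  show "Gi k A - Gi k B \<subseteq> (\<lambda>m. cv (pc k m)) ` (A - B)"
  proof
    fix x assume "x \<in> Gi k A - Gi k B"
    then obtain m where "m \<in> A" "x = cv (pc k m)" "x \<notin> Gi k B" unfolding GG_def by auto
    then have "m \<notin> B" unfolding GG_def by auto
    then show "x \<in> (\<lambda>m. cv (pc k m)) ` (A - B)" using \<open>m \<in> A\<close> \<open>x = cv (pc k m)\<close> by auto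
  qed
next
  show "(\<lambda>m. cv (pc k m)) ` (A - B) \<subseteq> Gi k A - Gi k B"
  proof
    fix x assume "x \<in> (\<lambda>m. cv (pc k m)) ` (A - B)"
    then obtain m where m: "m \<in> A" "m \<notin> B" "x = cv (pc k m)" by auto
    have "x \<notin> EE k \<union> FF k" using cv_notEF[OF k2] m by simp
    moreover have "x \<notin> cv ` pc k ` B"
    proof
      assume "x \<in> cv ` pc k ` B"
      then obtain i where "i \<in> B" "cv (pc k m) = cv (pc k i)" using m by auto
      then have "pc k m = pc k i" using cv_inj by blast
      moreover have "m \<le> T1 k" "i \<le> T1 k" using m assms(2,3) \<open>i \<in> B\<close> by auto
      ultimately have "m = i" using Q4[OF k2] by blast
      then show False using m \<open>i \<in> B\<close> by simp
    qed
    ultimately show "x \<in> Gi k A - Gi k B" using m unfolding GG_def by auto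
  qed
qed

lemma T_pos: "2 \<le> k \<Longrightarrow> 1 \<le> T1 k"
proof -
  assume k2: "2 \<le> k"
  have "psum k 0 < psum k (k-1)" using psum_strict[of 0 "k-1" k] k2 by simp
  then show ?thesis unfolding T1_psum psum_0 by simp
qed

lemma cv_V: "2 \<le> k \<Longrightarrow> c \<in> P k \<Longrightarrow> cv c \<subseteq> VH k \<and> card (cv c) = 3"
  using P_bounds[of k c] VH_mem1 VH_mem2 VH_mem3 unfolding cv_pairs by auto

lemma EE_3:
  assumes k2: "2 \<le> k" and x: "x \<in> EE k"
  shows "x \<subseteq> VH k \<and> card x = 3"
proof -
  obtain c d where cd: "c \<in> P k" "d \<in> P k" "adj c d" "x = tri c d" using x EE_char[OF k2] by blast
  have b: "1 \<le> fst c" "fst c \<le> 4*k-3" "1 \<le> snd c" "snd c \<le> 4*k-3"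
          "1 \<le> fst d" "fst d \<le> 4*k-3" "1 \<le> snd d" "snd d \<le> 4*k-3"
    using P_bounds[OF k2 cd(1)] P_bounds[OF k2 cd(2)] by auto
  have "x \<subseteq> VH k" unfolding cd(4) tri_pairs using b VH_mem1 VH_mem2 by auto
  moreover have "card x = 3"
    using cd(3) unfolding cd(4) tri_pairs adj_def by (auto simp: insert_commute)
  ultimately show ?thesis by simp
qed

lemma FF_3:
  assumes "x \<in> FF k"
  shows "x \<subseteq> VH k \<and> card x = 3"
proof -
  obtain l j where "x = {(l,j),(l,j+1),(3,1)}" "j \<in> {1..4*k-4}" "l \<in> {1,2}"
    using assms unfolding FF_pairs by blast
  then show ?thesis using VH_mem1 VH_mem2 VH_mem3 by auto
qed

theorem lemma3p2:
  fixes k :: nat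
  assumes "k \<ge> 2"
  shows "sequential (VH k) (H1 k) (eseq k) (T1 k)"
proof -
  have k2: "2 \<le> k" using assms by simp
  define T where "T = T1 k"
  have T1: "1 \<le> T" unfolding T_def by (rule T_pos[OF k2])
  have e_pc: "\<And>i. i \<le> T \<Longrightarrow> eseq k i = cv (pc k i)" unfolding T_def using eseq_pc[OF k2] by simp
  have H: "H1 k = Gi k {0}"
    unfolding H1_def GG_def using e_pc[of 0] by simp
  have e0: "eseq k 0 \<notin> EE k \<union> FF k" using e_pc[of 0] cv_notEF[OF k2] by simp
  have H2: "H1 k - {eseq k 0} = Gi k {}"
    unfolding H1_def GG_def using e0 by auto
  have neq: "eseq k T \<noteq> eseq k 0"
  proof
    assume "eseq k T = eseq k 0"
    then have "pc k T = pc k 0" using e_pc[of T] e_pc[of 0] cv_inj by simp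
    then have "T = 0" using Q4[OF k2, of T 0] unfolding T_def by simp
    then show False using T1 by simp
  qed
  have H3: "(H1 k \<union> {eseq k T}) - {eseq k 0} = Gi k {T}"
    unfolding H1_def GG_def using e0 neq e_pc[of T] by auto
  have is3: "is_3graph (VH k) (H1 k)"
    unfolding is_3graph_def H1_def
    using EE_3[OF k2] FF_3 cv_V[OF k2, of "pc k 0"] P_pc[of 0 k] e_pc[of 0] by auto
  have ev: "\<forall>i \<le> T. eseq k i \<subseteq> VH k \<and> card (eseq k i) = 3"
    using cv_V[OF k2] P_pc e_pc unfolding T_def by auto
  have ein: "eseq k 0 \<in> H1 k" unfolding H1_def by simp
  have st1: "stationary (VH k) (boot (VH k) (H1 k) T)"
    unfolding stationary_def H boot_up[OF k2, of T, folded T_def, OF order_refl]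
    using step_Gi[OF k2, of "{0..T}"] nb_up2[of k] unfolding T_def by simp
  have d1: "\<forall>i \<in> {1..T}. boot (VH k) (H1 k) i - boot (VH k) (H1 k) (i - 1) = {eseq k i}"
  proof
    fix i assume i: "i \<in> {1..T}"
    have "boot (VH k) (H1 k) i - boot (VH k) (H1 k) (i - 1) = Gi k {0..i} - Gi k {0..i-1}"
    proof -
      have "i \<le> T1 k" "i - 1 \<le> T1 k" using i unfolding T_def by auto
      then show ?thesis unfolding H using boot_up[OF k2, of i] boot_up[OF k2, of "i-1"] by simp
    qed
    also have "\<dots> = (\<lambda>m. cv (pc k m)) ` ({0..i} - {0..i-1})"
      by (rule Gi_diff[OF k2]) (use i in \<open>auto simp: T_def\<close>)
    also have "{0..i} - {0..i-1} = {i}" using i by auto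
    finally show "boot (VH k) (H1 k) i - boot (VH k) (H1 k) (i - 1) = {eseq k i}"
      using e_pc[of i] i by simp
  qed
  have st2: "stationary (VH k) (H1 k - {eseq k 0})"
    unfolding stationary_def H2 using step_Gi[OF k2, of "{}"] by (simp add: nb_def)
  have d3: "\<forall>i \<in> {1..T}. boot (VH k) ((H1 k \<union> {eseq k T}) - {eseq k 0}) i
      - boot (VH k) ((H1 k \<union> {eseq k T}) - {eseq k 0}) (i - 1) = {eseq k (T - i)}"
  proof
    fix i assume i: "i \<in> {1..T}"
    have "boot (VH k) ((H1 k \<union> {eseq k T}) - {eseq k 0}) i
      - boot (VH k) ((H1 k \<union> {eseq k T}) - {eseq k 0}) (i - 1) = Gi k {T-i..T} - Gi k {T-(i-1)..T}"
    proof -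
      have "i \<le> T1 k" "i - 1 \<le> T1 k" using i unfolding T_def by auto
      then show ?thesis unfolding H3 using boot_down[OF k2, of i] boot_down[OF k2, of "i-1"] unfolding T_def by simp
    qed
    also have "\<dots> = (\<lambda>m. cv (pc k m)) ` ({T-i..T} - {T-(i-1)..T})"
      by (rule Gi_diff[OF k2]) (use i in \<open>auto simp: T_def\<close>)
    also have "{T-i..T} - {T-(i-1)..T} = {T-i}" using i by auto
    finally show "boot (VH k) ((H1 k \<union> {eseq k T}) - {eseq k 0}) i
      - boot (VH k) ((H1 k \<union> {eseq k T}) - {eseq k 0}) (i - 1) = {eseq k (T - i)}"
      using e_pc[of "T-i"] i by simp
  qed
  show ?thesis unfolding sequential_def T_def[symmetric]
    using is3 ev ein st1 d1 st2 d3 by blast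
qed

end
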